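(* Let $N,M\ge 1$, let $\varrho_0$ be a density operator on $\mathbb{C}^N\otimes\mathbb{C}^M$, let $p\in[0,1]$, let $\tau$ be any density operator on $\mathbb{C}^N\otimes\mathbb{C}^M$, and define the noise channel $D_p^\tau(\varrho):=p\,\tau\,\mathrm{Tr}(\varrho)+(1-p)\varrho$. For $x\in\{1,\ldots,N\}$ let $\widehat{O}_x$ be the oracle channel on $\mathcal{B}(\mathbb{C}^N\otimes\mathbb{C}^M)$ given by $\widehat{O}_x(|y\rangle\langle y'|\otimes\sigma)=(-1)^{\delta_{xy}+\delta_{xy'}}|y\rangle\langle y'|\otimes\sigma$. Let $k\ge1$ and let $T_1,T_1',\ldots,T_k,T_k'$ be arbitrary quantum channels (completely positive trace-preserving maps) on $\mathcal{B}(\mathbb{C}^N\otimes\mathbb{C}^M)$, not depending on $x$, and set $$\varrho_k^x=T_k'\widehat{O}_xT_kD_p^\tau\cdots D_p^\tau T_2'\widehat{O}_xT_2D_p^\tau T_1'\widehat{O}_xT_1D_p^\tau(\varrho_0).$$ Let $(E_y)_{y=1}^N$ be any POVM on $\mathbb{C}^N\otimes\mathbb{C}^M$. Then the average success probability $p_s:=\sum_{x=1}^N\frac1N\mathrm{Tr}[\varrho_k^xE_x]$ satisfies $$p_s\le\frac1N+\frac{8}{Np^2}\qquad\text{and}\qquad p_s\le 8\,\frac{k+1}{Np}.$$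
   Context: The $T_i,T_i'$ need not be unital. Composition of maps is written by juxtaposition. *)

theory Defs
  imports "Jordan_Normal_Form.Matrix"
begin

definition mtrace :: "complex mat \<Rightarrow> complex" where
  "mtrace A = (\<Sum>i<dim_row A. A $$ (i, i))"

text \<open>Matrices on C^N (x) C^M are complex (N*M)x(N*M) matrices; the basis vector
 |y> (x) |j> (0-based y < N, j < M) has index y*M + j (Kronecker convention).\<close>

definition psd :: "nat \<Rightarrow> complex mat \<Rightarrow> bool" where
  "psd n A \<longleftrightarrow> A \<in> carrier_mat n n \<and>
     (\<forall>v :: nat \<Rightarrow> complex.
        Im (\<Sum>i<n. \<Sum>j<n. cnj (v i) * A $$ (i, j) * v j) = 0 \<and>
        Re (\<Sum>i<n. \<Sum>j<n. cnj (v i) * A $$ (i, j) * v j) \<ge> 0)"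

definition density_op :: "nat \<Rightarrow> complex mat \<Rightarrow> bool" where
  "density_op n A \<longleftrightarrow> psd n A \<and> mtrace A = 1"

definition lin_map :: "nat \<Rightarrow> (complex mat \<Rightarrow> complex mat) \<Rightarrow> bool" where
  "lin_map d T \<longleftrightarrow>
     (\<forall>A \<in> carrier_mat d d. T A \<in> carrier_mat d d) \<and>
     (\<forall>A \<in> carrier_mat d d. \<forall>B \<in> carrier_mat d d. T (A + B) = T A + T B) \<and>
     (\<forall>A \<in> carrier_mat d d. \<forall>c. T (c \<cdot>\<^sub>m A) = c \<cdot>\<^sub>m T A)"

definition blk :: "nat \<Rightarrow> complex mat \<Rightarrow> nat \<Rightarrow> nat \<Rightarrow> complex mat" where
  "blk d X a b = mat d d (\<lambda>(i, j). X $$ (a * d + i, b * d + j))"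

definition ampl :: "nat \<Rightarrow> nat \<Rightarrow> (complex mat \<Rightarrow> complex mat) \<Rightarrow> complex mat \<Rightarrow> complex mat" where
  "ampl n d T X = mat (n * d) (n * d)
     (\<lambda>(r, c). T (blk d X (r div d) (c div d)) $$ (r mod d, c mod d))"

definition completely_positive :: "nat \<Rightarrow> (complex mat \<Rightarrow> complex mat) \<Rightarrow> bool" where
  "completely_positive d T \<longleftrightarrow>
     (\<forall>n X. psd (n * d) X \<longrightarrow> psd (n * d) (ampl n d T X))"

definition quantum_channel :: "nat \<Rightarrow> (complex mat \<Rightarrow> complex mat) \<Rightarrow> bool" where
  "quantum_channel d T \<longleftrightarrow> lin_map d T \<and> completely_positive d T \<and>
     (\<forall>A \<in> carrier_mat d d. mtrace (T A) = mtrace A)"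

definition noise :: "real \<Rightarrow> complex mat \<Rightarrow> complex mat \<Rightarrow> complex mat" where
  "noise p \<tau> \<rho> = (complex_of_real p * mtrace \<rho>) \<cdot>\<^sub>m \<tau> + complex_of_real (1 - p) \<cdot>\<^sub>m \<rho>"

text \<open>Query channel O_x (x 0-based, x < N): multiplies the entry
 (|y>|j>, |y'>|j'>) by (-1)^(delta_xy + delta_xy').\<close>
definition orcl :: "nat \<Rightarrow> nat \<Rightarrow> nat \<Rightarrow> complex mat \<Rightarrow> complex mat" where
  "orcl N M x A = mat (N * M) (N * M)
     (\<lambda>(r, c). (-1) ^ ((if r div M = x then 1 else 0) + (if c div M = x then 1 else 0)) * A $$ (r, c))"

fun state :: "nat \<Rightarrow> nat \<Rightarrow> real \<Rightarrow> complex mat \<Rightarrow> (nat \<Rightarrow> complex mat \<Rightarrow> complex mat)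
     \<Rightarrow> (nat \<Rightarrow> complex mat \<Rightarrow> complex mat) \<Rightarrow> complex mat \<Rightarrow> nat \<Rightarrow> nat \<Rightarrow> complex mat" where
  "state N M p \<tau> T T' \<rho>0 x 0 = \<rho>0"
| "state N M p \<tau> T T' \<rho>0 x (Suc i) =
     T' i (orcl N M x (T i (noise p \<tau> (state N M p \<tau> T T' \<rho>0 x i))))"

definition povm :: "nat \<Rightarrow> nat \<Rightarrow> (nat \<Rightarrow> complex mat) \<Rightarrow> bool" where
  "povm d K E \<longleftrightarrow> (\<forall>y<K. psd d (E y)) \<and> (\<forall>i<d. \<forall>j<d. (\<Sum>y<K. E y $$ (i, j)) = (if i = j then 1 else 0))"

end

theory Submission
  imports Defs
begin
definition sg :: "'a set \<Rightarrow> ('a \<Rightarrow> 'a \<Rightarrow> complex) \<Rightarrow> ('a \<Rightarrow> complex) \<Rightarrow> ('a \<Rightarrow> complex) \<Rightarrow> complex" where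
  "sg I B u v = (\<Sum>i\<in>I. \<Sum>j\<in>I. cnj (u i) * B i j * v j)"

definition psdg :: "'a set \<Rightarrow> ('a \<Rightarrow> 'a \<Rightarrow> complex) \<Rightarrow> bool" where
  "psdg I B \<longleftrightarrow> (\<forall>v. Im (sg I B v v) = 0 \<and> Re (sg I B v v) \<ge> 0)"

lemma sg_expand:
  "sg I B (\<lambda>i. u i + c * v i) (\<lambda>i. u i + c * v i) =
    sg I B u u + c * sg I B u v + cnj c * sg I B v u + cnj c * c * sg I B v v"
proof -
  have "\<And>i j. cnj (u i + c * v i) * B i j * (u j + c * v j) =
     cnj (u i) * B i j * u j + c * (cnj (u i) * B i j * v j) + cnj c * (cnj (v i) * B i j * u j)
     + cnj c * c * (cnj (v i) * B i j * v j)" by (simp add: algebra_simps)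
  thus ?thesis unfolding sg_def by (simp add: sum.distrib sum_distrib_left)
qed

lemma sg_add:
  "sg I B (\<lambda>i. u i + v i) (\<lambda>i. u i + v i) =
    sg I B u u + sg I B u v + sg I B v u + sg I B v v"
  using sg_expand[of I B u 1 v] by simp

lemma psdg_herm_form:
  assumes "psdg I B"
  shows "sg I B v u = cnj (sg I B u v)"
proof -
  let ?a = "sg I B u u" and ?b = "sg I B v v" and ?al = "sg I B u v" and ?be = "sg I B v u"
  have a: "Im ?a = 0" and b: "Im ?b = 0" using assms unfolding psdg_def by auto
  have 1: "Im (sg I B (\<lambda>i. u i + v i) (\<lambda>i. u i + v i)) = 0"
    using assms unfolding psdg_def by blast
  have 2: "Im (sg I B (\<lambda>i. u i + \<i> * v i) (\<lambda>i. u i + \<i> * v i)) = 0"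
    using assms unfolding psdg_def by blast
  from 1 a b have i1: "Im ?al + Im ?be = 0" unfolding sg_add by simp
  from 2 a b have i2: "Re ?al - Re ?be = 0" unfolding sg_expand by simp
  show ?thesis using i1 i2 by (simp add: complex_eq_iff)
qed

lemma psdg_re:
  assumes "psdg I B" shows "sg I B v v = of_real (Re (sg I B v v))"
  using assms unfolding psdg_def by (simp add: complex_eq_iff)

lemma aux_div: "(x::real) > 0 \<Longrightarrow> 2 * (y / (2*x)) * x = y" by simp

lemma psdg_CS:
  assumes "psdg I B"
  shows "(cmod (sg I B u v))\<^sup>2 \<le> Re (sg I B u u) * Re (sg I B v v)"
proof -
  let ?a = "Re (sg I B u u)" and ?b = "Re (sg I B v v)" and ?al = "sg I B u v"
  have key: "0 \<le> ?a - 2 * t * (cmod ?al)\<^sup>2 + t\<^sup>2 * (cmod ?al)\<^sup>2 * ?b" for t :: real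
  proof -
    let ?c = "- (of_real t) * cnj ?al"
    have "0 \<le> Re (sg I B (\<lambda>i. u i + ?c * v i) (\<lambda>i. u i + ?c * v i))"
      using assms unfolding psdg_def by blast
    also have "sg I B (\<lambda>i. u i + ?c * v i) (\<lambda>i. u i + ?c * v i) =
       sg I B u u + ?c * ?al + cnj ?c * cnj ?al + cnj ?c * ?c * sg I B v v"
      unfolding sg_expand psdg_herm_form[OF assms, of v u] by (rule refl)
    also have "Re \<dots> = ?a - 2 * t * (cmod ?al)\<^sup>2 + t\<^sup>2 * (cmod ?al)\<^sup>2 * ?b"
    proof -
      have n: "cnj ?al * ?al = of_real ((cmod ?al)\<^sup>2)"
        by (metis complex_norm_square mult.commute)
      have e1: "?c * ?al = - of_real (t * (cmod ?al)\<^sup>2)"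
      proof -
        have "?c * ?al = - of_real t * (cnj ?al * ?al)" by (simp add: algebra_simps)
        thus ?thesis unfolding n by simp
      qed
      have e2: "cnj ?c * cnj ?al = - of_real (t * (cmod ?al)\<^sup>2)"
      proof -
        have "cnj ?c * cnj ?al = - of_real t * (cnj ?al * ?al)" by (simp add: algebra_simps)
        thus ?thesis unfolding n by simp
      qed
      have e3: "cnj ?c * ?c = of_real (t\<^sup>2 * (cmod ?al)\<^sup>2)"
      proof -
        have "cnj ?c * ?c = of_real t * of_real t * (cnj ?al * ?al)" by (simp add: algebra_simps)
        thus ?thesis unfolding n by (simp add: power2_eq_square)
      qed
      show ?thesis unfolding e1 e2 e3 by simp
    qed
    finally show ?thesis .
  qed
  have a0: "?a \<ge> 0" and b0: "?b \<ge> 0" using assms unfolding psdg_def by auto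
  show ?thesis
  proof (cases "?b = 0")
    case True
    show ?thesis
    proof (rule ccontr)
      assume "\<not> ?thesis"
      hence pos: "(cmod ?al)\<^sup>2 > 0" using True by simp
      have "0 \<le> ?a - 2 * ((?a + 1) / (2 * (cmod ?al)\<^sup>2)) * (cmod ?al)\<^sup>2"
        using key[of "(?a + 1) / (2 * (cmod ?al)\<^sup>2)"] True by simp
      also have "\<dots> = -1" using aux_div[OF pos, of "?a + 1"] by linarith
      finally show False by simp
    qed
  next
    case False
    hence bp: "?b > 0" using b0 by simp
    have "0 \<le> ?a - 2 * (1/?b) * (cmod ?al)\<^sup>2 + (1/?b)\<^sup>2 * (cmod ?al)\<^sup>2 * ?b"
      using key by blast
    also have "\<dots> = ?a - (cmod ?al)\<^sup>2 / ?b" using bp by (simp add: field_simps power2_eq_square)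
    finally have "(cmod ?al)\<^sup>2 / ?b \<le> ?a" by linarith
    thus ?thesis by (simp add: pos_divide_le_eq[OF bp])
  qed
qed

lemma psdg_triangle:
  assumes "psdg I B"
  shows "sqrt (Re (sg I B (\<lambda>i. u i + v i) (\<lambda>i. u i + v i)))
     \<le> sqrt (Re (sg I B u u)) + sqrt (Re (sg I B v v))"
proof -
  let ?a = "Re (sg I B u u)" and ?b = "Re (sg I B v v)" and ?al = "sg I B u v"
  have a0: "?a \<ge> 0" and b0: "?b \<ge> 0" using assms unfolding psdg_def by auto
  have e: "Re (sg I B (\<lambda>i. u i + v i) (\<lambda>i. u i + v i)) = ?a + 2 * Re ?al + ?b"
    unfolding sg_add psdg_herm_form[OF assms, of v u] by simp
  have c: "cmod ?al \<le> sqrt ?a * sqrt ?b"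
  proof -
    have "(cmod ?al)\<^sup>2 \<le> (sqrt ?a * sqrt ?b)\<^sup>2"
      using psdg_CS[OF assms, of u v] a0 b0 by (simp add: power_mult_distrib)
    thus ?thesis using a0 b0 by (meson power2_le_imp_le real_sqrt_ge_zero mult_nonneg_nonneg)
  qed
  have r: "Re ?al \<le> cmod ?al" by (rule complex_Re_le_cmod)
  have sq: "(sqrt ?a + sqrt ?b)\<^sup>2 = ?a + 2 * (sqrt ?a * sqrt ?b) + ?b"
    using a0 b0 by (simp add: power2_sum)
  have "Re (sg I B (\<lambda>i. u i + v i) (\<lambda>i. u i + v i)) \<le> (sqrt ?a + sqrt ?b)\<^sup>2"
    unfolding e sq using c r by linarith
  hence "sqrt (Re (sg I B (\<lambda>i. u i + v i) (\<lambda>i. u i + v i))) \<le> sqrt ((sqrt ?a + sqrt ?b)\<^sup>2)"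
    by (rule real_sqrt_le_mono)
  also have "\<dots> = sqrt ?a + sqrt ?b" using a0 b0 by simp
  finally show ?thesis .
qed

definition ev :: "'a \<Rightarrow> 'a \<Rightarrow> complex" where "ev m = (\<lambda>i. if i = m then 1 else 0)"

lemma sg_ev_right: "finite I \<Longrightarrow> m \<in> I \<Longrightarrow> sg I B v (ev m) = (\<Sum>i\<in>I. cnj (v i) * B i m)"
proof -
  assume "finite I" "m \<in> I"
  have "\<And>i. (\<Sum>j\<in>I. cnj (v i) * B i j * ev m j) = cnj (v i) * B i m"
    using \<open>finite I\<close> \<open>m \<in> I\<close> by (simp add: ev_def if_distrib cong: if_cong)
  thus ?thesis unfolding sg_def by simp
qed

lemma sg_ev_left: "finite I \<Longrightarrow> m \<in> I \<Longrightarrow> sg I B (ev m) v = (\<Sum>j\<in>I. B m j * v j)"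
proof -
  assume "finite I" "m \<in> I"
  have "\<And>i. (\<Sum>j\<in>I. cnj (ev m i) * B i j * v j) = (if i = m then (\<Sum>j\<in>I. B m j * v j) else 0)"
    by (simp add: ev_def)
  thus ?thesis unfolding sg_def using \<open>finite I\<close> \<open>m \<in> I\<close> by simp
qed

lemma sg_ev_ev: "finite I \<Longrightarrow> a \<in> I \<Longrightarrow> b \<in> I \<Longrightarrow> sg I B (ev a) (ev b) = B a b"
  by (simp add: sg_ev_left) (simp add: ev_def if_distrib cong: if_cong)

lemma psdg_herm:
  assumes "psdg I B" "finite I" "a \<in> I" "b \<in> I"
  shows "B a b = cnj (B b a)"
  using psdg_herm_form[OF assms(1), of "ev a" "ev b"] sg_ev_ev[OF assms(2-4)] sg_ev_ev[OF assms(2,4,3)]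
  by simp

lemma psdg_diag:
  assumes "psdg I B" "finite I" "a \<in> I"
  shows "B a a = of_real (Re (B a a))" "Re (B a a) \<ge> 0"
  using assms sg_ev_ev[OF assms(2,3,3), of B] unfolding psdg_def
  by (metis complex_eq_iff Im_complex_of_real Re_complex_of_real)+

lemma sg_rank1_sub:
  "sg I (\<lambda>i j. C i j - w i * cnj (w j)) v v = sg I C v v - (\<Sum>i\<in>I. cnj (v i) * w i) * cnj (\<Sum>i\<in>I. cnj (v i) * w i)"
proof -
  have "sg I (\<lambda>i j. C i j - w i * cnj (w j)) v v = sg I C v v - (\<Sum>i\<in>I. \<Sum>j\<in>I. (cnj (v i) * w i) * (cnj (w j) * v j))"
    unfolding sg_def by (simp add: algebra_simps sum_subtractf)
  also have "(\<Sum>i\<in>I. \<Sum>j\<in>I. (cnj (v i) * w i) * (cnj (w j) * v j)) = (\<Sum>i\<in>I. cnj (v i) * w i) * (\<Sum>j\<in>I. cnj (w j) * v j)"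
    by (simp add: sum_product)
  also have "(\<Sum>j\<in>I. cnj (w j) * v j) = cnj (\<Sum>i\<in>I. cnj (v i) * w i)"
    by (simp add: mult.commute)
  finally show ?thesis .
qed

lemma chol_step:
  assumes "m < n" and P: "psdg {..<n} C" and Z: "\<forall>i<n. \<forall>j<n. i < m \<or> j < m \<longrightarrow> C i j = 0"
  shows "\<exists>w C'. psdg {..<n} C' \<and> (\<forall>i<n. \<forall>j<n. i < Suc m \<or> j < Suc m \<longrightarrow> C' i j = 0) \<and>
     (\<forall>i<n. \<forall>j<n. C i j = w i * cnj (w j) + C' i j)"
proof -
  define b where "b = Re (C m m)"
  have mI: "m \<in> {..<n}" using assms by simp 
  have fin: "finite {..<n}" by simp 
  have Cmm: "C m m = of_real b" using psdg_diag(1)[OF P fin mI] unfolding b_def .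
  have b0: "b \<ge> 0" using psdg_diag(2)[OF P fin mI] unfolding b_def .
  have herm: "\<And>i j. i < n \<Longrightarrow> j < n \<Longrightarrow> C i j = cnj (C j i)"
    by (intro psdg_herm[OF P fin]) auto
  show ?thesis
  proof (cases "b = 0")
    case True
    have col0: "C i m = 0" if "i < n" for i
    proof -
      have "(cmod (sg {..<n} C (ev i) (ev m)))\<^sup>2 \<le> Re (sg {..<n} C (ev i) (ev i)) * Re (sg {..<n} C (ev m) (ev m))"
        by (rule psdg_CS[OF P])
      hence "(cmod (C i m))\<^sup>2 \<le> 0" using sg_ev_ev[OF fin] that mI True b_def by simp 
      thus ?thesis by simp 
    qed
    have row0: "C m j = 0" if "j < n" for j using herm[OF _ that, of m] col0[OF that] assms(1) by simp 
    show ?thesis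
    proof (intro exI[of _ "\<lambda>_. 0"] exI[of _ C] conjI allI impI)
      fix i j assume ij: "i < n" "j < n" "i < Suc m \<or> j < Suc m"
      then consider "i < m \<or> j < m" | "i = m" | "j = m" by linarith
      thus "C i j = 0"
      proof cases
        case 1 thus ?thesis using Z ij by blast
      next
        case 2 thus ?thesis using row0 ij by simp 
      next
        case 3 thus ?thesis using col0 ij by simp 
      qed
    qed (use P in auto)
  next
    case False
    hence bp: "b > 0" using b0 by simp 
    define sb where "sb = complex_of_real (sqrt b)"
    have sbsb: "cnj sb * sb = of_real b" "sb * cnj sb = of_real b" "sb \<noteq> 0" "cnj sb = sb"
      unfolding sb_def using bp by (simp_all flip: of_real_mult) 
    define w where "w = (\<lambda>i. C i m / sb)"
    define C' where "C' = (\<lambda>i j. C i j - w i * cnj (w j))"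
    show ?thesis
    proof (intro exI[of _ w] exI[of _ C'] conjI allI impI)
      fix i j assume "i < n" "j < n" thus "C i j = w i * cnj (w j) + C' i j" unfolding C'_def by simp 
    next
      fix i j assume ij: "i < n" "j < n" "i < Suc m \<or> j < Suc m"
      then consider "i < m" | "j < m" | "i = m" | "j = m" by linarith
      thus "C' i j = 0"
      proof cases
        case 1 thus ?thesis using Z ij mI unfolding C'_def w_def by auto 
      next
        case 2 thus ?thesis using Z ij mI unfolding C'_def w_def by auto 
      next
        case 3
        have "w m * cnj (w j) = C m m * cnj (C j m) / (sb * cnj sb)" unfolding w_def by simp 
        also have "\<dots> = C m j" using Cmm sbsb herm[OF ij(2), of m] mI bp
          by (simp add: field_simps) 
        finally show ?thesis unfolding C'_def 3 by simp 
      next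
        case 4
        have "w i * cnj (w m) = C i m * cnj (C m m) / (sb * cnj sb)" unfolding w_def by simp 
        also have "\<dots> = C i m" using Cmm sbsb bp by (simp add: field_simps) 
        finally show ?thesis unfolding C'_def 4 by simp 
      qed
    next
      show "psdg {..<n} C'"
        unfolding psdg_def
      proof
        fix v
        let ?g = "\<Sum>i\<in>{..<n}. cnj (v i) * w i"
        have g: "?g = sg {..<n} C v (ev m) / sb"
          unfolding w_def sg_ev_right[OF fin mI] by (simp add: sum_divide_distrib) 
        have gg: "?g * cnj ?g = of_real ((cmod (sg {..<n} C v (ev m)))\<^sup>2 / b)"
        proof -
          have "?g * cnj ?g = (sg {..<n} C v (ev m) * cnj (sg {..<n} C v (ev m))) / (sb * cnj sb)"
            unfolding g by simp 
          also have "\<dots> = of_real ((cmod (sg {..<n} C v (ev m)))\<^sup>2) / of_real b"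
            using sbsb(2) complex_norm_square[of "sg {..<n} C v (ev m)"] by simp
          finally show ?thesis by simp
        qed
        have cs: "(cmod (sg {..<n} C v (ev m)))\<^sup>2 \<le> Re (sg {..<n} C v v) * b"
          using psdg_CS[OF P, of v "ev m"] sg_ev_ev[OF fin mI mI, of C] b_def by simp 
        have e: "sg {..<n} C' v v = sg {..<n} C v v - ?g * cnj ?g"
          unfolding C'_def by (rule sg_rank1_sub)
        show "Im (sg {..<n} C' v v) = 0 \<and> 0 \<le> Re (sg {..<n} C' v v)"
          unfolding e gg using P cs bp unfolding psdg_def
          by (simp add: pos_divide_le_eq) 
      qed
    qed
  qed
qed

lemma chol_inv:
  fixes n m :: nat
  assumes P: "psdg {..<n} B"
  shows "m \<le> n \<Longrightarrow> \<exists>w C. psdg {..<n} C \<and> (\<forall>i<n. \<forall>j<n. i < m \<or> j < m \<longrightarrow> C i j = 0) \<and>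
     (\<forall>i<n. \<forall>j<n. B i j = (\<Sum>l<m. w l i * cnj (w l j)) + C i j)"
proof (induction m)
  case 0
  show ?case using P by (intro exI[of _ "\<lambda>_ _. 0"] exI[of _ B]) auto
next
  case (Suc m)
  then obtain w C where C: "psdg {..<n} C" "\<forall>i<n. \<forall>j<n. i < m \<or> j < m \<longrightarrow> C i j = 0"
    "\<forall>i<n. \<forall>j<n. B i j = (\<Sum>l<m. w l i * cnj (w l j)) + C i j" by auto
  obtain u C' where C': "psdg {..<n} C'" "\<forall>i<n. \<forall>j<n. i < Suc m \<or> j < Suc m \<longrightarrow> C' i j = 0"
     "\<forall>i<n. \<forall>j<n. C i j = u i * cnj (u j) + C' i j"
    using chol_step[OF _ C(1,2)] Suc.prems by (metis Suc_le_lessD)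
  have "\<forall>i<n. \<forall>j<n. B i j = (\<Sum>l<Suc m. (w(m := u)) l i * cnj ((w(m := u)) l j)) + C' i j"
  proof (intro allI impI)
    fix i j assume ij: "i < n" "j < n"
    have s: "(\<Sum>l<m. (w(m := u)) l i * cnj ((w(m := u)) l j)) = (\<Sum>l<m. w l i * cnj (w l j))"
      by (intro sum.cong) auto
    show "B i j = (\<Sum>l<Suc m. (w(m := u)) l i * cnj ((w(m := u)) l j)) + C' i j"
      unfolding sum.lessThan_Suc s using C(3) C'(3) ij by simp
  qed
  thus ?case using C'(1,2) by blast
qed

lemma chol:
  fixes n :: nat
  assumes P: "psdg {..<n} B"
  shows "\<exists>w. \<forall>i<n. \<forall>j<n. B i j = (\<Sum>l<n. w l i * cnj (w l j))"
  using chol_inv[OF P, of n] by auto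

definition Eu :: "nat \<Rightarrow> nat \<Rightarrow> nat \<Rightarrow> complex mat" where
  "Eu d a b = mat d d (\<lambda>(i, j). if i = a \<and> j = b then 1 else 0)"

definition AP :: "nat \<Rightarrow> complex mat \<Rightarrow> (nat \<times> nat) set \<Rightarrow> complex mat" where
  "AP d A P = mat d d (\<lambda>(a, b). if (a, b) \<in> P then A $$ (a, b) else 0)"

lemma lin_zero:
  assumes L: "lin_map d T"
  shows "T (0\<^sub>m d d) = 0\<^sub>m d d"
proof -
  have z: "0\<^sub>m d d = (0::complex) \<cdot>\<^sub>m 0\<^sub>m d d" by (intro eq_matI) auto
  have c: "T (0\<^sub>m d d) \<in> carrier_mat d d" using L unfolding lin_map_def by auto
  have "T (0\<^sub>m d d) = (0::complex) \<cdot>\<^sub>m T (0\<^sub>m d d)"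
    using L unfolding lin_map_def by (metis z zero_carrier_mat)
  also have "\<dots> = 0\<^sub>m d d" using c by (intro eq_matI) auto
  finally show ?thesis .
qed

lemma lin_AP:
  assumes L: "lin_map d T" and A: "A \<in> carrier_mat d d" and fin: "finite P"
    and sub: "P \<subseteq> {..<d} \<times> {..<d}" and ij: "i < d" "j < d"
  shows "T (AP d A P) $$ (i, j) = (\<Sum>p\<in>P. A $$ p * T (Eu d (fst p) (snd p)) $$ (i, j))"
  using fin sub
proof (induction P rule: finite_induct)
  case empty
  have "AP d A {} = 0\<^sub>m d d" unfolding AP_def by (intro eq_matI) auto
  thus ?case using lin_zero[OF L] ij by simp
next
  case (insert p P)
  obtain a b where p: "p = (a, b)" by (cases p)
  have ab: "a < d" "b < d" using insert.prems p by auto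
  have dec: "AP d A (insert p P) = AP d A P + A $$ (a, b) \<cdot>\<^sub>m Eu d a b"
    unfolding AP_def Eu_def p using insert.hyps(2) p by (intro eq_matI) auto
  have c1: "AP d A P \<in> carrier_mat d d" "Eu d a b \<in> carrier_mat d d"
    "A $$ (a, b) \<cdot>\<^sub>m Eu d a b \<in> carrier_mat d d" unfolding AP_def Eu_def by auto
  have "T (AP d A (insert p P)) = T (AP d A P) + A $$ (a, b) \<cdot>\<^sub>m T (Eu d a b)"
    unfolding dec using L c1 unfolding lin_map_def by simp
  moreover have "T (AP d A P) \<in> carrier_mat d d" "T (Eu d a b) \<in> carrier_mat d d"
    using L c1 unfolding lin_map_def by auto
  ultimately have "T (AP d A (insert p P)) $$ (i, j) = T (AP d A P) $$ (i, j) + A $$ (a, b) * T (Eu d a b) $$ (i, j)"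
    using ij by simp
  thus ?case using insert p by simp
qed

lemma lin_expand:
  assumes L: "lin_map d T" and A: "A \<in> carrier_mat d d" and ij: "i < d" "j < d"
  shows "T A $$ (i, j) = (\<Sum>a<d. \<Sum>b<d. A $$ (a, b) * T (Eu d a b) $$ (i, j))"
proof -
  have "AP d A ({..<d} \<times> {..<d}) = A" unfolding AP_def using A by (intro eq_matI) auto
  hence "T A $$ (i, j) = (\<Sum>p\<in>{..<d} \<times> {..<d}. A $$ p * T (Eu d (fst p) (snd p)) $$ (i, j))"
    using lin_AP[OF L A _ _ ij, of "{..<d} \<times> {..<d}"] by simp
  also have "\<dots> = (\<Sum>a<d. \<Sum>b<d. A $$ (a, b) * T (Eu d a b) $$ (i, j))"
    by (simp add: sum.cartesian_product split_def)
  finally show ?thesis .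
qed

definition Om :: "nat \<Rightarrow> complex mat" where
  "Om d = mat (d * d) (d * d) (\<lambda>(r, c). if r mod d = r div d \<and> c mod d = c div d then 1 else 0)"

lemma psd_Om: "psd (d * d) (Om d)"
  unfolding psd_def
proof (intro conjI allI)
  show "Om d \<in> carrier_mat (d * d) (d * d)" unfolding Om_def by simp
  fix v :: "nat \<Rightarrow> complex"
  define u where "u r = (if r mod d = r div d then (1::complex) else 0)" for r
  define S where "S = (\<Sum>r<d*d. u r * v r)"
  have "(\<Sum>i<d * d. \<Sum>j<d * d. cnj (v i) * Om d $$ (i, j) * v j) =
     (\<Sum>i<d * d. \<Sum>j<d * d. (cnj (u i * v i)) * (u j * v j))"
    unfolding Om_def u_def by (intro sum.cong refl) auto
  also have "\<dots> = cnj S * S" unfolding S_def by (simp add: sum_product)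
  also have "\<dots> = of_real ((cmod S)\<^sup>2)" by (metis complex_norm_square mult.commute)
  finally have e: "(\<Sum>i<d * d. \<Sum>j<d * d. cnj (v i) * Om d $$ (i, j) * v j) = of_real ((cmod S)\<^sup>2)" .
  show "Im (\<Sum>i<d * d. \<Sum>j<d * d. cnj (v i) * Om d $$ (i, j) * v j) = 0" unfolding e by simp
  show "0 \<le> Re (\<Sum>i<d * d. \<Sum>j<d * d. cnj (v i) * Om d $$ (i, j) * v j)" unfolding e by simp
qed

lemma idx_lt: "a < d \<Longrightarrow> i < d \<Longrightarrow> a * d + i < d * (d::nat)"
proof -
  assume "a < d" "i < d"
  hence "Suc a * d \<le> d * d" using mult_le_mono1[of "Suc a" d d] by linarith
  thus ?thesis using \<open>i < d\<close> by simp
qed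

lemma blk_Om: "a < d \<Longrightarrow> b < d \<Longrightarrow> blk d (Om d) a b = Eu d a b"
  unfolding blk_def Om_def Eu_def
proof (intro eq_matI)
  fix i j assume a: "a < d" "b < d" and ij: "i < dim_row (mat d d (\<lambda>(i, j). if i = a \<and> j = b then 1 else 0))"
      "j < dim_col (mat d d (\<lambda>(i, j). if i = a \<and> j = b then 1 else 0))"
  hence ij': "i < d" "j < d" by auto
  have r: "a * d + i < d * d" "b * d + j < d * d" using a ij' by (auto intro: idx_lt)
  have m: "(a * d + i) mod d = i" "(a * d + i) div d = a" "(b * d + j) mod d = j" "(b * d + j) div d = b"
    using ij' by auto
  show "mat d d (\<lambda>(i, j). (mat (d * d) (d * d) (\<lambda>(r, c). if r mod d = r div d \<and> c mod d = c div d then 1 else 0)) $$ (a * d + i, b * d + j)) $$ (i, j) =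
    mat d d (\<lambda>(i, j). if i = a \<and> j = b then 1 else 0) $$ (i, j)"
    using ij' r m by simp
qed auto

lemma psd_psdg: "psd n A \<Longrightarrow> psdg {..<n} (\<lambda>i j. A $$ (i, j))"
  unfolding psd_def psdg_def sg_def by simp

lemma choi_entry:
  assumes "a < d" "b < d" "i < d" "j < d"
  shows "ampl d d T (Om d) $$ (a * d + i, b * d + j) = T (Eu d a b) $$ (i, j)"
proof -
  have r: "a * d + i < d * d" "b * d + j < d * d" using assms by (auto intro: idx_lt)
  have m: "(a * d + i) mod d = i" "(a * d + i) div d = a" "(b * d + j) mod d = j" "(b * d + j) div d = b"
    using assms by auto
  show ?thesis unfolding ampl_def using r m blk_Om[OF assms(1,2)] by simp
qed

lemma kraus:
  assumes Q: "quantum_channel d T"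
  shows "\<exists>K. (\<forall>A\<in>carrier_mat d d. \<forall>i<d. \<forall>j<d.
            T A $$ (i, j) = (\<Sum>l<d*d. \<Sum>a<d. \<Sum>b<d. K l i a * A $$ (a, b) * cnj (K l j b))) \<and>
         (\<forall>a<d. \<forall>b<d. (\<Sum>l<d*d. \<Sum>i<d. cnj (K l i a) * K l i b) = (if a = b then 1 else 0))"
proof -
  have L: "lin_map d T" and CP: "completely_positive d T"
    and TP: "\<forall>A\<in>carrier_mat d d. mtrace (T A) = mtrace A"
    using Q unfolding quantum_channel_def by auto
  have "psd (d * d) (ampl d d T (Om d))" using CP psd_Om unfolding completely_positive_def by blast
  from chol[OF psd_psdg[OF this]] obtain w where
    w: "\<forall>r<d*d. \<forall>c<d*d. ampl d d T (Om d) $$ (r, c) = (\<Sum>l<d*d. w l r * cnj (w l c))" by blast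
  define K where "K l i a = w l (a * d + i)" for l i a
  have E: "T (Eu d a b) $$ (i, j) = (\<Sum>l<d*d. K l i a * cnj (K l j b))"
    if "a < d" "b < d" "i < d" "j < d" for a b i j
    using choi_entry[OF that, of T] w idx_lt[OF that(1,3)] idx_lt[OF that(2,4)] unfolding K_def by simp
  have Eu_c: "Eu d a b \<in> carrier_mat d d" for a b unfolding Eu_def by simp
  show ?thesis
  proof (intro exI[of _ K] conjI ballI allI impI)
    fix A :: "complex mat" and i j assume A: "A \<in> carrier_mat d d" and ij: "i < d" "j < d"
    have "T A $$ (i, j) = (\<Sum>a<d. \<Sum>b<d. A $$ (a, b) * T (Eu d a b) $$ (i, j))"
      by (rule lin_expand[OF L A ij])
    also have "\<dots> = (\<Sum>a<d. \<Sum>b<d. \<Sum>l<d*d. K l i a * A $$ (a, b) * cnj (K l j b))"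
      by (intro sum.cong refl) (simp add: E ij sum_distrib_left algebra_simps)
    also have "\<dots> = (\<Sum>a<d. \<Sum>l<d*d. \<Sum>b<d. K l i a * A $$ (a, b) * cnj (K l j b))"
      by (intro sum.cong refl sum.swap)
    also have "\<dots> = (\<Sum>l<d*d. \<Sum>a<d. \<Sum>b<d. K l i a * A $$ (a, b) * cnj (K l j b))"
      by (rule sum.swap)
    finally show "T A $$ (i, j) = (\<Sum>l<d*d. \<Sum>a<d. \<Sum>b<d. K l i a * A $$ (a, b) * cnj (K l j b))" .
  next
    fix a b assume ab: "a < d" "b < d"
    have tc: "T (Eu d b a) \<in> carrier_mat d d" using L Eu_c unfolding lin_map_def by blast
    have "mtrace (T (Eu d b a)) = mtrace (Eu d b a)" using TP Eu_c by blast
    also have "mtrace (Eu d b a) = (if a = b then 1 else 0)"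
    proof -
      have "\<And>i. i < d \<Longrightarrow> Eu d b a $$ (i, i) = (if i = a then (if a = b then 1 else 0) else 0)"
        unfolding Eu_def by auto
      hence "mtrace (Eu d b a) = (\<Sum>i<d. (if i = a then (if a = b then 1 else 0) else 0))"
        unfolding mtrace_def Eu_def by simp
      thus ?thesis using ab by simp
    qed
    also have "mtrace (T (Eu d b a)) = (\<Sum>i<d. \<Sum>l<d*d. K l i b * cnj (K l i a))"
      unfolding mtrace_def using tc ab by (simp add: E)
    also have "\<dots> = (\<Sum>l<d*d. \<Sum>i<d. cnj (K l i a) * K l i b)"
      by (subst sum.swap) (simp add: mult.commute)
    finally show "(\<Sum>l<d*d. \<Sum>i<d. cnj (K l i a) * K l i b) = (if a = b then 1 else 0)" by simp
  qed
qed

definition ffS :: "'s set \<Rightarrow> nat \<Rightarrow> (nat \<Rightarrow> nat \<Rightarrow> complex) \<Rightarrow> ('s \<Rightarrow> nat \<Rightarrow> complex) \<Rightarrow> ('s \<Rightarrow> nat \<Rightarrow> complex) \<Rightarrow> complex" where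
  "ffS S d E G H = (\<Sum>s\<in>S. \<Sum>i<d. \<Sum>j<d. cnj (G s i) * E i j * H s j)"

definition EB :: "(nat \<Rightarrow> nat \<Rightarrow> complex) \<Rightarrow> ('s \<times> nat) \<Rightarrow> ('s \<times> nat) \<Rightarrow> complex" where
  "EB E = (\<lambda>(s, i) (s', j). if s = s' then E i j else 0)"

lemma sg_EB:
  assumes "finite S"
  shows "sg (S \<times> {..<d}) (EB E) w v = (\<Sum>s\<in>S. sg {..<d} E (\<lambda>i. w (s, i)) (\<lambda>i. v (s, i)))"
proof -
  have inner: "(\<Sum>q\<in>S \<times> {..<d}. cnj (w p) * EB E p q * v q) =
     (if snd p < d then \<Sum>j<d. cnj (w p) * E (snd p) j * v (fst p, j) else 0)"
    if "p \<in> S \<times> {..<d}" for p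
  proof -
    obtain s i where p: "p = (s, i)" by (cases p)
    have "(\<Sum>q\<in>S \<times> {..<d}. cnj (w p) * EB E p q * v q) =
       (\<Sum>s'\<in>S. \<Sum>j<d. cnj (w p) * EB E p (s', j) * v (s', j))"
      by (rule sum.cartesian_product')
    also have "\<dots> = (\<Sum>s'\<in>S. \<Sum>j<d. cnj (w (s, i)) * (if s = s' then E i j else 0) * v (s', j))"
      unfolding p EB_def by simp
    also have "\<dots> = (\<Sum>s'\<in>S. if s' = s then (\<Sum>j<d. cnj (w (s, i)) * E i j * v (s, j)) else 0)"
      by (intro sum.cong refl) auto
    also have "\<dots> = (\<Sum>j<d. cnj (w (s, i)) * E i j * v (s, j))"
      using that assms p by simp
    finally show ?thesis using that p by simp
  qed
  have "sg (S \<times> {..<d}) (EB E) w v = (\<Sum>p\<in>S \<times> {..<d}. \<Sum>j<d. cnj (w p) * E (snd p) j * v (fst p, j))"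
    unfolding sg_def by (intro sum.cong refl) (auto simp: inner)
  also have "\<dots> = (\<Sum>s\<in>S. sg {..<d} E (\<lambda>i. w (s, i)) (\<lambda>i. v (s, i)))"
    unfolding sg_def by (simp add: sum.cartesian_product' split_def)
  finally show ?thesis .
qed

lemma ffS_sg:
  assumes "finite S"
  shows "ffS S d E G H = sg (S \<times> {..<d}) (EB E) (\<lambda>(s, i). G s i) (\<lambda>(s, i). H s i)"
  unfolding ffS_def sg_EB[OF assms] by (simp add: sg_def)

lemma psdg_EB:
  assumes "finite S" "psdg {..<d} E"
  shows "psdg (S \<times> {..<d}) (EB E)"
  unfolding psdg_def
proof
  fix v
  have "\<forall>s\<in>S. Im (sg {..<d} E (\<lambda>i. v (s, i)) (\<lambda>i. v (s, i))) = 0 \<and> Re (sg {..<d} E (\<lambda>i. v (s, i)) (\<lambda>i. v (s, i))) \<ge> 0"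
    using assms(2) unfolding psdg_def by blast
  thus "Im (sg (S \<times> {..<d}) (EB E) v v) = 0 \<and> 0 \<le> Re (sg (S \<times> {..<d}) (EB E) v v)"
    unfolding sg_EB[OF assms(1)] by (simp add: Im_sum Re_sum sum_nonneg)
qed

lemma ffS_props:
  assumes "finite S" "psdg {..<d} E"
  shows "Im (ffS S d E G G) = 0" "Re (ffS S d E G G) \<ge> 0"
  using psdg_EB[OF assms] unfolding ffS_sg[OF assms(1)] psdg_def by auto

lemma ffS_triangle:
  assumes "finite S" "psdg {..<d} E"
  shows "sqrt (Re (ffS S d E (\<lambda>s i. G s i + H s i) (\<lambda>s i. G s i + H s i)))
    \<le> sqrt (Re (ffS S d E G G)) + sqrt (Re (ffS S d E H H))"
proof -
  have e: "(\<lambda>(s, i). G s i + H s i) = (\<lambda>p. (\<lambda>(s, i). G s i) p + (\<lambda>(s, i). H s i) p)" by auto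
  show ?thesis unfolding ffS_sg[OF assms(1)] e
    by (rule psdg_triangle[OF psdg_EB[OF assms]])
qed

lemma real_CS:
  fixes u v :: "'a \<Rightarrow> real"
  assumes "finite I"
  shows "(\<Sum>i\<in>I. u i * v i)\<^sup>2 \<le> (\<Sum>i\<in>I. (u i)\<^sup>2) * (\<Sum>i\<in>I. (v i)\<^sup>2)"
proof -
  have "0 \<le> (\<Sum>i\<in>I. \<Sum>j\<in>I. (u i * v j - u j * v i)\<^sup>2)" by (intro sum_nonneg) auto
  also have "(\<Sum>i\<in>I. \<Sum>j\<in>I. (u i * v j - u j * v i)\<^sup>2) =
     (\<Sum>i\<in>I. \<Sum>j\<in>I. (u i)\<^sup>2 * (v j)\<^sup>2) + (\<Sum>i\<in>I. \<Sum>j\<in>I. (u j)\<^sup>2 * (v i)\<^sup>2)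
     - 2 * (\<Sum>i\<in>I. \<Sum>j\<in>I. (u i * v i) * (u j * v j))"
    by (simp add: power2_eq_square algebra_simps sum.distrib sum_subtractf sum_distrib_left)
  also have "(\<Sum>i\<in>I. \<Sum>j\<in>I. (u i)\<^sup>2 * (v j)\<^sup>2) = (\<Sum>i\<in>I. (u i)\<^sup>2) * (\<Sum>i\<in>I. (v i)\<^sup>2)"
    by (simp add: sum_product)
  also have "(\<Sum>i\<in>I. \<Sum>j\<in>I. (u j)\<^sup>2 * (v i)\<^sup>2) = (\<Sum>i\<in>I. (u i)\<^sup>2) * (\<Sum>i\<in>I. (v i)\<^sup>2)"
    by (subst sum.swap) (simp add: sum_product)
  also have "(\<Sum>i\<in>I. \<Sum>j\<in>I. (u i * v i) * (u j * v j)) = (\<Sum>i\<in>I. u i * v i)\<^sup>2"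
    by (simp add: sum_product power2_eq_square)
  finally show ?thesis by simp
qed

definition appK :: "nat \<Rightarrow> (nat \<Rightarrow> nat \<Rightarrow> complex) \<Rightarrow> (nat \<Rightarrow> complex) \<Rightarrow> nat \<Rightarrow> complex" where
  "appK d K v = (\<lambda>i. \<Sum>a<d. K i a * v a)"

definition cn :: "nat \<Rightarrow> (nat \<Rightarrow> complex) \<Rightarrow> complex" where
  "cn d v = (\<Sum>i<d. cnj (v i) * v i)"

definition isoK :: "nat \<Rightarrow> (nat \<Rightarrow> nat \<Rightarrow> nat \<Rightarrow> complex) \<Rightarrow> bool" where
  "isoK d K \<longleftrightarrow> (\<forall>a<d. \<forall>b<d. (\<Sum>l<d*d. \<Sum>i<d. cnj (K l i a) * K l i b) = (if a = b then 1 else 0))"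

lemma sum4_swap:
  "(\<Sum>l\<in>A. \<Sum>i\<in>B. \<Sum>a\<in>C. \<Sum>b\<in>E. g l i a b) = (\<Sum>a\<in>C. \<Sum>b\<in>E. \<Sum>l\<in>A. \<Sum>i\<in>B. g l i a b)"
proof -
  have "(\<Sum>l\<in>A. \<Sum>i\<in>B. \<Sum>a\<in>C. \<Sum>b\<in>E. g l i a b) = (\<Sum>l\<in>A. \<Sum>a\<in>C. \<Sum>i\<in>B. \<Sum>b\<in>E. g l i a b)"
    by (intro sum.cong refl sum.swap)
  also have "\<dots> = (\<Sum>l\<in>A. \<Sum>a\<in>C. \<Sum>b\<in>E. \<Sum>i\<in>B. g l i a b)"
    by (intro sum.cong refl sum.swap)
  also have "\<dots> = (\<Sum>a\<in>C. \<Sum>l\<in>A. \<Sum>b\<in>E. \<Sum>i\<in>B. g l i a b)"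
    by (rule sum.swap)
  also have "\<dots> = (\<Sum>a\<in>C. \<Sum>b\<in>E. \<Sum>l\<in>A. \<Sum>i\<in>B. g l i a b)"
    by (intro sum.cong refl sum.swap)
  finally show ?thesis .
qed

lemma cnj_sum_prod:
  "cnj (\<Sum>a\<in>A. K a * v a) * (\<Sum>b\<in>A. K b * v b) = (\<Sum>a\<in>A. \<Sum>b\<in>A. (cnj (v a) * v b) * (cnj (K a) * K b))"
proof -
  have "cnj (\<Sum>a\<in>A. K a * v a) * (\<Sum>b\<in>A. K b * v b) = (\<Sum>a\<in>A. \<Sum>b\<in>A. cnj (K a * v a) * (K b * v b))"
    unfolding cnj_sum sum_product ..
  also have "\<dots> = (\<Sum>a\<in>A. \<Sum>b\<in>A. (cnj (v a) * v b) * (cnj (K a) * K b))"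
    by (intro sum.cong refl) simp
  finally show ?thesis .
qed

lemma iso_cn:
  assumes "isoK d K"
  shows "(\<Sum>l<d*d. cn d (appK d (K l) v)) = cn d v"
proof -
  have "(\<Sum>l<d*d. cn d (appK d (K l) v)) =
     (\<Sum>l<d*d. \<Sum>i<d. \<Sum>a<d. \<Sum>b<d. (cnj (v a) * v b) * (cnj (K l i a) * K l i b))"
    unfolding cn_def appK_def
    by (intro sum.cong refl) (rule cnj_sum_prod)
  also have "\<dots> = (\<Sum>a<d. \<Sum>b<d. \<Sum>l<d*d. \<Sum>i<d. (cnj (v a) * v b) * (cnj (K l i a) * K l i b))"
    by (rule sum4_swap)
  also have "\<dots> = (\<Sum>a<d. \<Sum>b<d. (cnj (v a) * v b) * (if a = b then 1 else 0))"
    using assms unfolding isoK_def by (intro sum.cong refl) (simp add: sum_distrib_left[symmetric])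
  also have "\<dots> = cn d v" unfolding cn_def by (simp add: if_distrib cong: if_cong)
  finally show ?thesis .
qed

lemma cn_real: "cn d v = of_real (\<Sum>i<d. (cmod (v i))\<^sup>2)"
  unfolding cn_def of_real_sum by (intro sum.cong refl) (metis complex_norm_square mult.commute)

lemma cn_nonneg: "Re (cn d v) \<ge> 0" "Im (cn d v) = 0"
  unfolding cn_real by (auto intro: sum_nonneg)

definition zz :: "nat \<Rightarrow> nat \<Rightarrow> nat \<Rightarrow> complex" where
  "zz M x i = (if i div M = x then -1 else 1)"

definition orc :: "nat \<Rightarrow> nat option \<Rightarrow> (nat \<Rightarrow> complex) \<Rightarrow> nat \<Rightarrow> complex" where
  "orc M ob v = (case ob of None \<Rightarrow> v | Some x \<Rightarrow> (\<lambda>i. zz M x i * v i))"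

lemma zz_sq: "cnj (zz M x i) * zz M x i = 1" by (simp add: zz_def)

lemma cn_orc: "cn d (orc M ob v) = cn d v"
proof (cases ob)
  case (Some x)
  have t: "\<And>i. cnj (zz M x i * v i) * (zz M x i * v i) = cnj (v i) * v i"
    by (simp add: zz_def)
  show ?thesis unfolding cn_def orc_def Some option.case t ..
qed (simp add: orc_def)

definition pmass :: "nat \<Rightarrow> nat \<Rightarrow> nat \<Rightarrow> (nat \<Rightarrow> complex) \<Rightarrow> complex" where
  "pmass d M x v = (\<Sum>i<d. if i div M = x then cnj (v i) * v i else 0)"

lemma cn_Zdiff: "cn d (\<lambda>i. zz M x i * v i - v i) = 4 * pmass d M x v"
proof -
  have "\<And>i. cnj (zz M x i * v i - v i) * (zz M x i * v i - v i) = 4 * (if i div M = x then cnj (v i) * v i else 0)"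
    by (simp add: zz_def algebra_simps)
  thus ?thesis unfolding cn_def pmass_def by (simp add: sum_distrib_left)
qed

lemma pmass_sum:
  assumes "d = N * M"
  shows "(\<Sum>x<N. pmass d M x v) = cn d v"
proof -
  have "(\<Sum>x<N. pmass d M x v) = (\<Sum>i<d. \<Sum>x<N. if i div M = x then cnj (v i) * v i else 0)"
    unfolding pmass_def by (rule sum.swap)
  also have "\<dots> = (\<Sum>i<d. cnj (v i) * v i)"
  proof (intro sum.cong refl)
    fix i assume "i \<in> {..<d}"
    hence "i div M < N" using assms by (simp add: less_mult_imp_div_less)
    thus "(\<Sum>x<N. if i div M = x then cnj (v i) * v i else 0) = cnj (v i) * v i"
      by (simp add: if_distrib eq_commute[of "i div M"] cong: if_cong)
  qed
  finally show ?thesis unfolding cn_def .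
qed

lemma pmass_nonneg: "Re (pmass d M x v) \<ge> 0" "Im (pmass d M x v) = 0"
proof -
  have e: "pmass d M x v = of_real (\<Sum>i<d. if i div M = x then (cmod (v i))\<^sup>2 else 0)"
    unfolding pmass_def of_real_sum by (intro sum.cong refl) (auto, metis complex_norm_square mult.commute of_real_power)
  show "Re (pmass d M x v) \<ge> 0" "Im (pmass d M x v) = 0" unfolding e by (auto intro: sum_nonneg)
qed

definition idx :: "nat \<Rightarrow> nat \<Rightarrow> nat list set" where
  "idx D t = {s. set s \<subseteq> {..<D} \<and> length s = 2 * t + 1}"

lemma finite_idx: "finite (idx D t)"
  unfolding idx_def by (rule finite_lists_length_eq) simp

lemma sum_idx_Suc:
  "(\<Sum>s\<in>idx D (Suc t). f s) = (\<Sum>s\<in>idx D t. \<Sum>l<D. \<Sum>l'<D. f (l' # l # s))"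
proof -
  have e: "2 * Suc t + 1 = Suc (Suc (2 * t + 1))" by simp
  let ?L = "\<lambda>n. {xs. set xs \<subseteq> {..<D} \<and> length xs = n}"
  have "(\<Sum>s\<in>idx D (Suc t). f s) = (\<Sum>s\<in>?L (Suc (Suc (2 * t + 1))). f s)"
    unfolding idx_def e ..
  also have "\<dots> = (\<Sum>p\<in>?L (Suc (2 * t + 1)) \<times> {..<D}. f (snd p # fst p))"
    unfolding lists_length_Suc_eq[of _ "Suc (2 * t + 1)"]
    by (subst sum.reindex[OF inj_split_Cons]) (simp add: split_def)
  also have "\<dots> = (\<Sum>q\<in>?L (Suc (2 * t + 1)). \<Sum>l'<D. f (l' # q))"
    by (simp add: sum.cartesian_product')
  also have "\<dots> = (\<Sum>p\<in>?L (2 * t + 1) \<times> {..<D}. \<Sum>l'<D. f (l' # snd p # fst p))"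
    unfolding lists_length_Suc_eq[of _ "2 * t + 1"]
    by (subst sum.reindex[OF inj_split_Cons]) (simp add: split_def)
  also have "\<dots> = (\<Sum>s\<in>idx D t. \<Sum>l<D. \<Sum>l'<D. f (l' # l # s))"
    unfolding idx_def by (simp add: sum.cartesian_product')
  finally show ?thesis .
qed

lemma idx0: "(\<Sum>s\<in>idx D 0. f s) = (\<Sum>l<D. f [l])"
proof -
  have "idx D 0 = (\<lambda>l. [l]) ` {..<D}" unfolding idx_def
    by (auto simp: length_Suc_conv)
  thus ?thesis by (simp add: sum.reindex inj_on_def)
qed

fun fam :: "nat \<Rightarrow> nat \<Rightarrow> (nat \<Rightarrow> nat \<Rightarrow> nat \<Rightarrow> nat \<Rightarrow> complex) \<Rightarrow> (nat \<Rightarrow> nat \<Rightarrow> nat \<Rightarrow> nat \<Rightarrow> complex)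
   \<Rightarrow> nat option \<Rightarrow> nat \<Rightarrow> (nat \<Rightarrow> nat \<Rightarrow> complex) \<Rightarrow> nat \<Rightarrow> nat list \<Rightarrow> nat \<Rightarrow> complex" where
  "fam d M KK KK' ob j F0 0 s = F0 (hd s)"
| "fam d M KK KK' ob j F0 (Suc t) s =
     appK d (KK' (j + t) (hd s)) (orc M ob (appK d (KK (j + t) (hd (tl s))) (fam d M KK KK' ob j F0 t (tl (tl s)))))"

definition Idm :: "nat \<Rightarrow> nat \<Rightarrow> complex" where "Idm i k = (if i = k then 1 else 0)"

lemma sum_Idm: "i < d \<Longrightarrow> (\<Sum>j<d. a * Idm i j * f j) = a * f i"
proof -
  assume "i < d"
  have "(\<Sum>j<d. a * Idm i j * f j) = (\<Sum>j<d. if i = j then a * f j else 0)"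
    unfolding Idm_def by (intro sum.cong) auto
  thus ?thesis using \<open>i < d\<close> by simp
qed

lemma psdg_Idm: "psdg {..<d} Idm"
proof -
  have "sg {..<d} Idm v v = cn d v" for v
    unfolding sg_def cn_def by (simp add: sum_Idm)
  thus ?thesis unfolding psdg_def using cn_nonneg by simp
qed

lemma ffS_Idm: "ffS S d Idm G G = (\<Sum>s\<in>S. cn d (G s))"
  unfolding ffS_def cn_def by (simp add: sum_Idm)

lemma step_norm:
  assumes "isoK d K'"
  shows "(\<Sum>s\<in>idx (d*d) (Suc t). cn d (appK d (K' (hd s)) (W (hd (tl s)) (tl (tl s)))))
     = (\<Sum>s\<in>idx (d*d) t. \<Sum>l<d*d. cn d (W l s))"
  unfolding sum_idx_Suc by (simp add: iso_cn[OF assms])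

lemma appK_diff: "appK d K (\<lambda>i. u i - v i) = (\<lambda>i. appK d K u i - appK d K v i)"
  unfolding appK_def by (simp add: sum_subtractf algebra_simps)

lemma appK_add: "appK d K (\<lambda>i. u i + v i) = (\<lambda>i. appK d K u i + appK d K v i)"
  unfolding appK_def by (simp add: sum.distrib algebra_simps)

lemma sum3_swap:
  "(\<Sum>y\<in>Y. \<Sum>s\<in>S. \<Sum>i\<in>I. \<Sum>k\<in>J. g y s i k) = (\<Sum>s\<in>S. \<Sum>i\<in>I. \<Sum>k\<in>J. \<Sum>y\<in>Y. g y s i k)"
proof -
  have "(\<Sum>y\<in>Y. \<Sum>s\<in>S. \<Sum>i\<in>I. \<Sum>k\<in>J. g y s i k) = (\<Sum>s\<in>S. \<Sum>y\<in>Y. \<Sum>i\<in>I. \<Sum>k\<in>J. g y s i k)"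
    by (rule sum.swap)
  also have "\<dots> = (\<Sum>s\<in>S. \<Sum>i\<in>I. \<Sum>y\<in>Y. \<Sum>k\<in>J. g y s i k)"
    by (intro sum.cong refl sum.swap)
  also have "\<dots> = (\<Sum>s\<in>S. \<Sum>i\<in>I. \<Sum>k\<in>J. \<Sum>y\<in>Y. g y s i k)"
    by (intro sum.cong refl sum.swap)
  finally show ?thesis .
qed

lemma ffS_povm:
  assumes "\<And>i k. i < d \<Longrightarrow> k < d \<Longrightarrow> (\<Sum>y<N. E y i k) = Idm i k"
  shows "(\<Sum>y<N. ffS S d (E y) G G) = ffS S d Idm G G"
proof -
  have "(\<Sum>y<N. ffS S d (E y) G G) = (\<Sum>s\<in>S. \<Sum>i<d. \<Sum>k<d. \<Sum>y<N. cnj (G s i) * E y i k * G s k)"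
    unfolding ffS_def by (rule sum3_swap)
  also have "\<dots> = ffS S d Idm G G"
    unfolding ffS_def using assms
    by (intro sum.cong refl) (simp add: sum_distrib_left[symmetric] sum_distrib_right[symmetric])
  finally show ?thesis .
qed

context
  fixes N M d j m :: nat and KK KK' :: "nat \<Rightarrow> nat \<Rightarrow> nat \<Rightarrow> nat \<Rightarrow> complex"
    and F0 :: "nat \<Rightarrow> nat \<Rightarrow> complex" and E :: "nat \<Rightarrow> nat \<Rightarrow> nat \<Rightarrow> complex"
  assumes dNM: "d = N * M"
    and isoR: "\<And>t. t < m \<Longrightarrow> isoK d (KK (j + t)) \<and> isoK d (KK' (j + t))"
    and F0n: "(\<Sum>l<d*d. cn d (F0 l)) = 1"
    and Epsd: "\<And>y. y < N \<Longrightarrow> psdg {..<d} (E y)"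
    and Esum: "\<And>i k. i < d \<Longrightarrow> k < d \<Longrightarrow> (\<Sum>y<N. E y i k) = Idm i k"
begin

abbreviation "Fm ob t \<equiv> fam d M KK KK' ob j F0 t"

definition FN :: "nat \<Rightarrow> (nat list \<Rightarrow> nat \<Rightarrow> complex) \<Rightarrow> complex" where
  "FN t G = (\<Sum>s\<in>idx (d*d) t. cn d (G s))"

lemma FN_ffS: "FN t G = ffS (idx (d*d) t) d Idm G G"
  unfolding FN_def ffS_Idm ..

lemma FN_nonneg: "Re (FN t G) \<ge> 0" "Im (FN t G) = 0"
  unfolding FN_def using cn_nonneg by (auto simp: Re_sum Im_sum intro: sum_nonneg)

lemma FN_None: "t \<le> m \<Longrightarrow> FN t (Fm None t) = 1"
proof (induction t)
  case 0
  show ?case unfolding FN_def idx0 using F0n by simp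
next
  case (Suc t)
  have iso: "isoK d (KK (j + t))" "isoK d (KK' (j + t))" using isoR Suc.prems by auto
  have "FN (Suc t) (Fm None (Suc t)) = (\<Sum>s\<in>idx (d*d) t. \<Sum>l<d*d. cn d (orc M None (appK d (KK (j + t) l) (Fm None t s))))"
    unfolding FN_def fam.simps by (rule step_norm[OF iso(2)])
  also have "\<dots> = FN t (Fm None t)"
    unfolding FN_def cn_orc iso_cn[OF iso(1)] ..
  finally have "FN (Suc t) (Fm None (Suc t)) = FN t (Fm None t)" .
  with Suc.IH Suc.prems show ?case by (metis Suc_leD)
qed

definition Dl :: "nat \<Rightarrow> nat \<Rightarrow> nat list \<Rightarrow> nat \<Rightarrow> complex" where
  "Dl x t = (\<lambda>s i. Fm (Some x) t s i - Fm None t s i)"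

definition aa :: "nat \<Rightarrow> nat \<Rightarrow> real" where
  "aa t x = Re (\<Sum>s\<in>idx (d*d) t. \<Sum>l<d*d. pmass d M x (appK d (KK (j + t) l) (Fm None t s)))"

definition dl :: "nat \<Rightarrow> nat \<Rightarrow> real" where
  "dl x t = sqrt (Re (FN t (Dl x t)))"

lemma aa_nonneg: "aa t x \<ge> 0"
  unfolding aa_def using pmass_nonneg by (auto simp: Re_sum intro!: sum_nonneg)

lemma aa_sum: "t < m \<Longrightarrow> (\<Sum>x<N. aa t x) = 1"
proof -
  assume tm: "t < m"
  have iso: "isoK d (KK (j + t))" using isoR tm by auto
  have "(\<Sum>x<N. (\<Sum>s\<in>idx (d*d) t. \<Sum>l<d*d. pmass d M x (appK d (KK (j + t) l) (Fm None t s))))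
     = (\<Sum>s\<in>idx (d*d) t. \<Sum>l<d*d. \<Sum>x<N. pmass d M x (appK d (KK (j + t) l) (Fm None t s)))"
  proof -
    have "(\<Sum>x<N. (\<Sum>s\<in>idx (d*d) t. \<Sum>l<d*d. pmass d M x (appK d (KK (j + t) l) (Fm None t s))))
       = (\<Sum>s\<in>idx (d*d) t. \<Sum>x<N. \<Sum>l<d*d. pmass d M x (appK d (KK (j + t) l) (Fm None t s)))"
      by (rule sum.swap)
    also have "\<dots> = (\<Sum>s\<in>idx (d*d) t. \<Sum>l<d*d. \<Sum>x<N. pmass d M x (appK d (KK (j + t) l) (Fm None t s)))"
      by (intro sum.cong refl sum.swap)
    finally show ?thesis .
  qed
  also have "\<dots> = FN t (Fm None t)"
    unfolding FN_def pmass_sum[OF dNM] iso_cn[OF iso] ..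
  also have "\<dots> = 1" using FN_None tm by simp
  finally show ?thesis unfolding aa_def by (simp flip: Re_sum)
qed

lemma dl0: "dl x 0 = 0"
  unfolding dl_def FN_def Dl_def by (simp add: cn_def)

lemma dl_step:
  assumes tm: "t < m"
  shows "dl x (Suc t) \<le> dl x t + 2 * sqrt (aa t x)"
proof -
  have iso: "isoK d (KK (j + t))" "isoK d (KK' (j + t))" using isoR tm by auto
  define r where "r = j + t"
  define A where "A = (\<lambda>s. appK d (KK' r (hd s)) (orc M (Some x) (appK d (KK r (hd (tl s))) (Dl x t (tl (tl s))))))"
  define W where "W = (\<lambda>l s. appK d (KK r l) (Fm None t s))"
  define B where "B = (\<lambda>s. appK d (KK' r (hd s)) (\<lambda>i. zz M x i * W (hd (tl s)) (tl (tl s)) i - W (hd (tl s)) (tl (tl s)) i))"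
  have dec: "Dl x (Suc t) = (\<lambda>s i. A s i + B s i)"
  proof (intro ext)
    fix s i
    let ?G = "Fm (Some x) t (tl (tl s))" and ?H = "Fm None t (tl (tl s))" and ?l = "hd (tl s)"
    have G: "appK d (KK r ?l) ?G = (\<lambda>i. appK d (KK r ?l) (Dl x t (tl (tl s))) i + appK d (KK r ?l) ?H i)"
    proof -
      have "?G = (\<lambda>i. Dl x t (tl (tl s)) i + ?H i)" unfolding Dl_def by auto
      thus ?thesis by (simp add: appK_add)
    qed
    have "Dl x (Suc t) s = (\<lambda>i. appK d (KK' r (hd s)) (orc M (Some x) (appK d (KK r ?l) ?G)) i
        - appK d (KK' r (hd s)) (appK d (KK r ?l) ?H) i)"
      unfolding Dl_def fam.simps r_def by (simp add: orc_def)
    also have "\<dots> = (\<lambda>i. A s i + B s i)"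
      unfolding A_def B_def W_def appK_diff[symmetric] appK_add[symmetric] G
      by (simp add: orc_def algebra_simps appK_add)
    finally show "Dl x (Suc t) s i = A s i + B s i" by simp
  qed
  have nA: "FN (Suc t) A = FN t (Dl x t)"
    unfolding FN_def A_def r_def
    by (subst step_norm[OF iso(2)]) (simp add: cn_orc iso_cn[OF iso(1)])
  have nB: "FN (Suc t) B = 4 * of_real (aa t x)"
  proof -
    have "FN (Suc t) B = (\<Sum>s\<in>idx (d*d) t. \<Sum>l<d*d. cn d (\<lambda>i. zz M x i * W l s i - W l s i))"
      unfolding FN_def B_def r_def by (rule step_norm[OF iso(2)])
    also have "\<dots> = 4 * (\<Sum>s\<in>idx (d*d) t. \<Sum>l<d*d. pmass d M x (W l s))"
      unfolding cn_Zdiff by (simp add: sum_distrib_left)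
    also have "(\<Sum>s\<in>idx (d*d) t. \<Sum>l<d*d. pmass d M x (W l s)) = of_real (aa t x)"
    proof -
      have "Im (\<Sum>s\<in>idx (d*d) t. \<Sum>l<d*d. pmass d M x (W l s)) = 0"
        using pmass_nonneg by (simp add: Im_sum)
      thus ?thesis unfolding aa_def W_def r_def by (simp add: complex_eq_iff)
    qed
    finally show ?thesis .
  qed
  have "dl x (Suc t) \<le> sqrt (Re (FN (Suc t) A)) + sqrt (Re (FN (Suc t) B))"
    unfolding dl_def dec FN_ffS by (rule ffS_triangle[OF finite_idx psdg_Idm])
  also have "\<dots> = dl x t + 2 * sqrt (aa t x)"
    unfolding nA nB dl_def by (simp add: real_sqrt_mult)
  finally show ?thesis .
qed


lemma dl_nonneg: "dl x t \<ge> 0" unfolding dl_def using FN_nonneg by simp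

lemma dl_bound: "t \<le> m \<Longrightarrow> dl x t \<le> 2 * (\<Sum>t'<t. sqrt (aa t' x))"
proof (induction t)
  case 0 show ?case by (simp add: dl0)
next
  case (Suc t)
  have "dl x (Suc t) \<le> dl x t + 2 * sqrt (aa t x)" using dl_step Suc.prems by simp
  also have "\<dots> \<le> 2 * (\<Sum>t'<t. sqrt (aa t' x)) + 2 * sqrt (aa t x)" using Suc by simp
  finally show ?case by simp
qed

lemma dl_sq_sum: "(\<Sum>x<N. (dl x m)\<^sup>2) \<le> 4 * (real m)\<^sup>2"
proof -
  have "(dl x m)\<^sup>2 \<le> 4 * real m * (\<Sum>t<m. aa t x)" for x
  proof -
    have "(dl x m)\<^sup>2 \<le> (2 * (\<Sum>t'<m. sqrt (aa t' x)))\<^sup>2"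
      using dl_bound[of m x] dl_nonneg by (intro power_mono) auto
    also have "\<dots> = 4 * (\<Sum>t'<m. 1 * sqrt (aa t' x))\<^sup>2" by (simp add: power_mult_distrib)
    also have "(\<Sum>t'<m. 1 * sqrt (aa t' x))\<^sup>2 \<le> (\<Sum>t'<m. 1\<^sup>2) * (\<Sum>t'<m. (sqrt (aa t' x))\<^sup>2)"
      by (rule real_CS) simp
    also have "(\<Sum>t'<m. (sqrt (aa t' x))\<^sup>2) = (\<Sum>t'<m. aa t' x)"
      using aa_nonneg by simp
    finally show ?thesis by simp
  qed
  hence "(\<Sum>x<N. (dl x m)\<^sup>2) \<le> (\<Sum>x<N. 4 * real m * (\<Sum>t<m. aa t x))"
    by (intro sum_mono) auto
  also have "\<dots> = 4 * real m * (\<Sum>t<m. \<Sum>x<N. aa t x)"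
    by (simp add: sum_distrib_left[symmetric] sum.swap[of _ "{..<N}"])
  also have "(\<Sum>t<m. \<Sum>x<N. aa t x) = real m" using aa_sum by simp
  finally show ?thesis by (simp add: power2_eq_square)
qed

lemma succ_x:
  assumes x: "x < N"
  shows "sqrt (Re (ffS (idx (d*d) m) d (E x) (Fm (Some x) m) (Fm (Some x) m)))
     \<le> sqrt (Re (ffS (idx (d*d) m) d (E x) (Fm None m) (Fm None m))) + dl x m"
proof -
  have e: "Fm (Some x) m = (\<lambda>s i. Fm None m s i + Dl x m s i)" unfolding Dl_def by auto
  have "Re (ffS (idx (d*d) m) d (E x) (Dl x m) (Dl x m)) \<le> (\<Sum>y<N. Re (ffS (idx (d*d) m) d (E y) (Dl x m) (Dl x m)))"
    using x ffS_props(2)[OF finite_idx Epsd] by (intro member_le_sum) auto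
  also have "\<dots> = Re (FN m (Dl x m))"
    unfolding FN_ffS using ffS_povm[OF Esum, where S="idx (d*d) m" and G="Dl x m"] by (metis Re_sum)
  finally have le: "sqrt (Re (ffS (idx (d*d) m) d (E x) (Dl x m) (Dl x m))) \<le> dl x m"
    unfolding dl_def by simp
  show ?thesis unfolding e using ffS_triangle[OF finite_idx Epsd[OF x]] le by (meson add_left_mono order_trans)
qed

theorem core_bound:
  "(\<Sum>x<N. Re (ffS (idx (d*d) m) d (E x) (Fm (Some x) m) (Fm (Some x) m))) \<le> (2 * real m + 1)\<^sup>2"
proof -
  define b where "b x = Re (ffS (idx (d*d) m) d (E x) (Fm None m) (Fm None m))" for x
  define S where "S x = Re (ffS (idx (d*d) m) d (E x) (Fm (Some x) m) (Fm (Some x) m))" for x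
  have b0: "b x \<ge> 0" if "x < N" for x unfolding b_def using ffS_props(2)[OF finite_idx Epsd[OF that]] .
  have S0: "S x \<ge> 0" if "x < N" for x unfolding S_def using ffS_props(2)[OF finite_idx Epsd[OF that]] .
  have bsum: "(\<Sum>x<N. b x) = 1"
  proof -
    have "(\<Sum>x<N. b x) = Re (FN m (Fm None m))"
      unfolding b_def FN_ffS using ffS_povm[OF Esum, where S="idx (d*d) m" and G="Fm None m"] by (metis Re_sum)
    thus ?thesis using FN_None by simp
  qed
  have Sx: "S x \<le> (sqrt (b x) + dl x m)\<^sup>2" if "x < N" for x
  proof -
    have "sqrt (S x) \<le> sqrt (b x) + dl x m" using succ_x[OF that] unfolding S_def b_def .
    hence "(sqrt (S x))\<^sup>2 \<le> (sqrt (b x) + dl x m)\<^sup>2"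
      using dl_nonneg S0[OF that] by (intro power_mono) auto
    thus ?thesis using S0[OF that] by simp
  qed
  have cs: "(\<Sum>x<N. sqrt (b x) * dl x m) \<le> 2 * real m"
  proof -
    have "(\<Sum>x<N. sqrt (b x) * dl x m)\<^sup>2 \<le> (\<Sum>x<N. (sqrt (b x))\<^sup>2) * (\<Sum>x<N. (dl x m)\<^sup>2)"
      by (rule real_CS) simp
    also have "(\<Sum>x<N. (sqrt (b x))\<^sup>2) = 1" using b0 bsum by simp
    also have "1 * (\<Sum>x<N. (dl x m)\<^sup>2) \<le> (2 * real m)\<^sup>2"
      using dl_sq_sum by (simp add: power_mult_distrib)
    finally have "(\<Sum>x<N. sqrt (b x) * dl x m)\<^sup>2 \<le> (2 * real m)\<^sup>2" .
    thus ?thesis by (rule power2_le_imp_le) simp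
  qed
  have "(\<Sum>x<N. S x) \<le> (\<Sum>x<N. (sqrt (b x) + dl x m)\<^sup>2)" using Sx by (intro sum_mono) auto
  also have "\<dots> = (\<Sum>x<N. b x) + 2 * (\<Sum>x<N. sqrt (b x) * dl x m) + (\<Sum>x<N. (dl x m)\<^sup>2)"
    using b0 by (simp add: power2_sum sum.distrib sum_distrib_left mult.assoc)
  also have "\<dots> \<le> 1 + 2 * (2 * real m) + 4 * (real m)\<^sup>2"
    using bsum cs dl_sq_sum by linarith
  also have "\<dots> = (2 * real m + 1)\<^sup>2" by (simp add: power2_eq_square algebra_simps)
  finally show ?thesis unfolding S_def .
qed

end

definition rep :: "nat \<Rightarrow> 'a set \<Rightarrow> ('a \<Rightarrow> nat \<Rightarrow> complex) \<Rightarrow> complex mat \<Rightarrow> bool" where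
  "rep d S V A \<longleftrightarrow> A \<in> carrier_mat d d \<and> (\<forall>a<d. \<forall>b<d. A $$ (a, b) = (\<Sum>s\<in>S. V s a * cnj (V s b)))"

definition krausrep :: "nat \<Rightarrow> (complex mat \<Rightarrow> complex mat) \<Rightarrow> (nat \<Rightarrow> nat \<Rightarrow> nat \<Rightarrow> complex) \<Rightarrow> bool" where
  "krausrep d T K \<longleftrightarrow> (\<forall>A\<in>carrier_mat d d. T A \<in> carrier_mat d d \<and> (\<forall>i<d. \<forall>j<d.
            T A $$ (i, j) = (\<Sum>l<d*d. \<Sum>a<d. \<Sum>b<d. K l i a * A $$ (a, b) * cnj (K l j b))))"

lemma kraus_full:
  assumes "quantum_channel d T"
  shows "\<exists>K. krausrep d T K \<and> isoK d K"
proof -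
  obtain K where K: "\<forall>A\<in>carrier_mat d d. \<forall>i<d. \<forall>j<d.
            T A $$ (i, j) = (\<Sum>l<d*d. \<Sum>a<d. \<Sum>b<d. K l i a * A $$ (a, b) * cnj (K l j b))"
    "\<forall>a<d. \<forall>b<d. (\<Sum>l<d*d. \<Sum>i<d. cnj (K l i a) * K l i b) = (if a = b then 1 else 0)"
    using kraus[OF assms] by blast
  have "\<forall>A\<in>carrier_mat d d. T A \<in> carrier_mat d d" using assms unfolding quantum_channel_def lin_map_def by blast
  thus ?thesis using K unfolding krausrep_def isoK_def by blast
qed

lemma appK_prod:
  "appK d K u i * cnj (appK d K u k) = (\<Sum>a<d. \<Sum>b<d. K i a * (u a * cnj (u b)) * cnj (K k b))"
  unfolding appK_def by (simp add: sum_product cnj_sum algebra_simps)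

lemma chan_rep:
  assumes K: "krausrep d T K" and R: "rep d S V A" and fin: "finite S"
  shows "rep d (S \<times> {..<d*d}) (\<lambda>(s, l). appK d (K l) (V s)) (T A)"
  unfolding rep_def
proof (intro conjI allI impI)
  have A: "A \<in> carrier_mat d d" using R unfolding rep_def by auto
  show "T A \<in> carrier_mat d d" using K A unfolding krausrep_def by auto
  fix i k assume ik: "i < d" "k < d"
  have "T A $$ (i, k) = (\<Sum>l<d*d. \<Sum>a<d. \<Sum>b<d. K l i a * A $$ (a, b) * cnj (K l k b))"
    using K A ik unfolding krausrep_def by auto
  also have "\<dots> = (\<Sum>l<d*d. \<Sum>a<d. \<Sum>b<d. \<Sum>s\<in>S. K l i a * (V s a * cnj (V s b)) * cnj (K l k b))"
    using R unfolding rep_def by (intro sum.cong refl) (simp add: sum_distrib_left sum_distrib_right)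
  also have "\<dots> = (\<Sum>l<d*d. \<Sum>s\<in>S. \<Sum>a<d. \<Sum>b<d. K l i a * (V s a * cnj (V s b)) * cnj (K l k b))"
  proof (intro sum.cong refl)
    fix l
    have "(\<Sum>a<d. \<Sum>b<d. \<Sum>s\<in>S. K l i a * (V s a * cnj (V s b)) * cnj (K l k b)) =
        (\<Sum>a<d. \<Sum>s\<in>S. \<Sum>b<d. K l i a * (V s a * cnj (V s b)) * cnj (K l k b))"
      by (intro sum.cong refl sum.swap)
    also have "\<dots> = (\<Sum>s\<in>S. \<Sum>a<d. \<Sum>b<d. K l i a * (V s a * cnj (V s b)) * cnj (K l k b))"
      by (rule sum.swap)
    finally show "(\<Sum>a<d. \<Sum>b<d. \<Sum>s\<in>S. K l i a * (V s a * cnj (V s b)) * cnj (K l k b)) =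
        (\<Sum>s\<in>S. \<Sum>a<d. \<Sum>b<d. K l i a * (V s a * cnj (V s b)) * cnj (K l k b))" .
  qed
  also have "\<dots> = (\<Sum>s\<in>S. \<Sum>l<d*d. appK d (K l) (V s) i * cnj (appK d (K l) (V s) k))"
    unfolding appK_prod by (rule sum.swap)
  also have "\<dots> = (\<Sum>p\<in>S \<times> {..<d*d}. (\<lambda>(s, l). appK d (K l) (V s)) p i * cnj ((\<lambda>(s, l). appK d (K l) (V s)) p k))"
    by (simp add: sum.cartesian_product')
  finally show "T A $$ (i, k) = (\<Sum>p\<in>S \<times> {..<d*d}. (\<lambda>(s, l). appK d (K l) (V s)) p i * cnj ((\<lambda>(s, l). appK d (K l) (V s)) p k))" .
qed

lemma orcl_rep:
  assumes R: "rep (N * M) S V A"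
  shows "rep (N * M) S (\<lambda>s. orc M (Some x) (V s)) (orcl N M x A)"
  unfolding rep_def
proof (intro conjI allI impI)
  show "orcl N M x A \<in> carrier_mat (N * M) (N * M)" unfolding orcl_def by simp
  fix a b assume ab: "a < N * M" "b < N * M"
  have "orcl N M x A $$ (a, b) = zz M x a * zz M x b * A $$ (a, b)"
    unfolding orcl_def zz_def using ab by simp
  also have "\<dots> = (\<Sum>s\<in>S. orc M (Some x) (V s) a * cnj (orc M (Some x) (V s) b))"
    using R ab unfolding rep_def orc_def by (simp add: sum_distrib_left zz_def algebra_simps)
  finally show "orcl N M x A $$ (a, b) = (\<Sum>s\<in>S. orc M (Some x) (V s) a * cnj (orc M (Some x) (V s) b))" .
qed

lemma rep_cong:
  assumes "rep d S V A" "(\<And>a b. a < d \<Longrightarrow> b < d \<Longrightarrow> (\<Sum>s\<in>S. V s a * cnj (V s b)) = (\<Sum>s\<in>S'. V' s a * cnj (V' s b)))"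
  shows "rep d S' V' A"
  using assms unfolding rep_def by auto

lemma round_rep:
  assumes K: "krausrep (N * M) T K" and K': "krausrep (N * M) T' K'"
    and R: "rep (N * M) (idx ((N*M)*(N*M)) t) V A"
  shows "rep (N * M) (idx ((N*M)*(N*M)) (Suc t))
     (\<lambda>s. appK (N*M) (K' (hd s)) (orc M (Some x) (appK (N*M) (K (hd (tl s))) (V (tl (tl s))))))
     (T' (orcl N M x (T A)))"
proof -
  let ?d = "N * M"
  have r1: "rep ?d (idx (?d*?d) t \<times> {..<?d*?d}) (\<lambda>(s, l). appK ?d (K l) (V s)) (T A)"
    by (rule chan_rep[OF K R finite_idx])
  have r2: "rep ?d (idx (?d*?d) t \<times> {..<?d*?d}) (\<lambda>p. orc M (Some x) ((\<lambda>(s, l). appK ?d (K l) (V s)) p)) (orcl N M x (T A))"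
    by (rule orcl_rep[OF r1])
  have r3: "rep ?d ((idx (?d*?d) t \<times> {..<?d*?d}) \<times> {..<?d*?d})
      (\<lambda>(p, l'). appK ?d (K' l') (orc M (Some x) ((\<lambda>(s, l). appK ?d (K l) (V s)) p))) (T' (orcl N M x (T A)))"
    by (rule chan_rep[OF K' r2]) (simp add: finite_idx)
  show ?thesis
  proof (rule rep_cong[OF r3])
    fix a b
    show "(\<Sum>q\<in>(idx (?d*?d) t \<times> {..<?d*?d}) \<times> {..<?d*?d}.
            (\<lambda>(p, l'). appK ?d (K' l') (orc M (Some x) ((\<lambda>(s, l). appK ?d (K l) (V s)) p))) q a *
            cnj ((\<lambda>(p, l'). appK ?d (K' l') (orc M (Some x) ((\<lambda>(s, l). appK ?d (K l) (V s)) p))) q b)) =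
          (\<Sum>s\<in>idx (?d*?d) (Suc t).
            appK ?d (K' (hd s)) (orc M (Some x) (appK ?d (K (hd (tl s))) (V (tl (tl s))))) a *
            cnj (appK ?d (K' (hd s)) (orc M (Some x) (appK ?d (K (hd (tl s))) (V (tl (tl s))))) b))"
      unfolding sum_idx_Suc by (simp add: sum.cartesian_product')
  qed
qed

lemma rep_trace:
  assumes R: "rep d S V A" and E: "E \<in> carrier_mat d d"
  shows "mtrace (A * E) = ffS S d (\<lambda>a b. E $$ (a, b)) V V"
proof -
  have A: "A \<in> carrier_mat d d" using R unfolding rep_def by auto
  have "mtrace (A * E) = (\<Sum>i<d. \<Sum>k<d. A $$ (i, k) * E $$ (k, i))"
    unfolding mtrace_def using A E
    by (simp add: scalar_prod_def atLeast0LessThan)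
  also have "\<dots> = (\<Sum>i<d. \<Sum>k<d. \<Sum>s\<in>S. cnj (V s k) * E $$ (k, i) * V s i)"
    using R unfolding rep_def by (intro sum.cong refl) (simp add: sum_distrib_right sum_distrib_left algebra_simps)
  also have "\<dots> = (\<Sum>k<d. \<Sum>i<d. \<Sum>s\<in>S. cnj (V s k) * E $$ (k, i) * V s i)"
    by (rule sum.swap)
  also have "\<dots> = (\<Sum>s\<in>S. \<Sum>k<d. \<Sum>i<d. cnj (V s k) * E $$ (k, i) * V s i)"
  proof -
    have "(\<Sum>k<d. \<Sum>i<d. \<Sum>s\<in>S. cnj (V s k) * E $$ (k, i) * V s i) = (\<Sum>k<d. \<Sum>s\<in>S. \<Sum>i<d. cnj (V s k) * E $$ (k, i) * V s i)"
      by (intro sum.cong refl sum.swap)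
    also have "\<dots> = (\<Sum>s\<in>S. \<Sum>k<d. \<Sum>i<d. cnj (V s k) * E $$ (k, i) * V s i)" by (rule sum.swap)
    finally show ?thesis .
  qed
  finally show ?thesis unfolding ffS_def .
qed

definition rnd :: "nat \<Rightarrow> nat \<Rightarrow> (nat \<Rightarrow> complex mat \<Rightarrow> complex mat) \<Rightarrow> (nat \<Rightarrow> complex mat \<Rightarrow> complex mat)
   \<Rightarrow> nat \<Rightarrow> nat \<Rightarrow> complex mat \<Rightarrow> complex mat" where
  "rnd N M T T' x r A = T' r (orcl N M x (T r A))"

fun runm :: "nat \<Rightarrow> nat \<Rightarrow> (nat \<Rightarrow> complex mat \<Rightarrow> complex mat) \<Rightarrow> (nat \<Rightarrow> complex mat \<Rightarrow> complex mat)
   \<Rightarrow> nat \<Rightarrow> nat \<Rightarrow> nat \<Rightarrow> complex mat \<Rightarrow> complex mat" where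
  "runm N M T T' x j 0 A = A"
| "runm N M T T' x j (Suc t) A = rnd N M T T' x (j + t) (runm N M T T' x j t A)"

lemma sum_if_less: "d \<le> (D::nat) \<Longrightarrow> (\<Sum>l<D. if l < d then g l else 0) = (\<Sum>l<d. g l)"
proof -
  assume "d \<le> D"
  hence "{..<D} \<inter> {l. l < d} = {..<d}" by auto
  thus ?thesis by (simp add: sum.If_cases)
qed

lemma branch_bound:
  fixes N M k j m :: nat and T T' :: "nat \<Rightarrow> complex mat \<Rightarrow> complex mat" and E :: "nat \<Rightarrow> complex mat"
    and \<sigma> :: "complex mat" and KK KK' :: "nat \<Rightarrow> nat \<Rightarrow> nat \<Rightarrow> nat \<Rightarrow> complex"
  assumes jm: "j + m \<le> k"
    and KR: "\<And>r. r < k \<Longrightarrow> krausrep (N * M) (T r) (KK r) \<and> isoK (N * M) (KK r) \<and>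
                             krausrep (N * M) (T' r) (KK' r) \<and> isoK (N * M) (KK' r)"
    and sig: "density_op (N * M) \<sigma>"
    and P: "povm (N * M) N E"
  shows "(\<Sum>x<N. Re (mtrace (runm N M T T' x j m \<sigma> * E x))) \<le> (2 * real m + 1)\<^sup>2"
proof -
  define d where "d = N * M"
  have sp: "psd d \<sigma>" and tr: "mtrace \<sigma> = 1" using sig unfolding density_op_def d_def by auto
  have dD: "d \<le> d * d" by (cases d) auto
  obtain w where w: "\<forall>a<d. \<forall>b<d. \<sigma> $$ (a, b) = (\<Sum>l<d. w l a * cnj (w l b))"
    using chol[OF psd_psdg[OF sp]] by blast
  define F0 where "F0 l = (if l < d then w l else (\<lambda>_. 0))" for l
  have rep0: "rep d (idx (d*d) 0) (\<lambda>s. F0 (hd s)) \<sigma>"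
    unfolding rep_def
  proof (intro conjI allI impI)
    show "\<sigma> \<in> carrier_mat d d" using sp unfolding psd_def by auto
    fix a b assume ab: "a < d" "b < d"
    have "(\<Sum>s\<in>idx (d*d) 0. F0 (hd s) a * cnj (F0 (hd s) b)) = (\<Sum>l<d*d. if l < d then w l a * cnj (w l b) else 0)"
      unfolding idx0 F0_def by (intro sum.cong refl) auto
    also have "\<dots> = \<sigma> $$ (a, b)" using sum_if_less[OF dD] w ab by simp
    finally show "\<sigma> $$ (a, b) = (\<Sum>s\<in>idx (d*d) 0. F0 (hd s) a * cnj (F0 (hd s) b))" by simp
  qed
  have F0n: "(\<Sum>l<d*d. cn d (F0 l)) = 1"
  proof -
    have "(\<Sum>l<d*d. cn d (F0 l)) = (\<Sum>l<d*d. if l < d then cn d (w l) else 0)"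
      unfolding F0_def by (intro sum.cong refl) (auto simp: cn_def)
    also have "\<dots> = (\<Sum>l<d. cn d (w l))" by (rule sum_if_less[OF dD])
    also have "\<dots> = (\<Sum>l<d. \<Sum>i<d. cnj (w l i) * w l i)" unfolding cn_def ..
    also have "\<dots> = (\<Sum>i<d. \<sigma> $$ (i, i))"
      using w by (subst sum.swap) (simp add: mult.commute)
    also have "\<dots> = mtrace \<sigma>"
    proof -
      have "dim_row \<sigma> = d" using sp unfolding psd_def by auto
      thus ?thesis unfolding mtrace_def by simp
    qed
    finally show ?thesis using tr by simp
  qed
  have repm: "rep d (idx (d*d) t) (fam d M KK KK' (Some x) j F0 t) (runm N M T T' x j t \<sigma>)"
    if "t \<le> m" for t x using that
  proof (induction t)
    case 0
    show ?case using rep0 by (simp add: fun_eq_iff)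
  next
    case (Suc t)
    have r: "j + t < k" using Suc.prems jm by simp
    show ?case
      unfolding runm.simps rnd_def d_def fam.simps[abs_def]
      using round_rep[OF conjunct1[OF KR[OF r]] conjunct1[OF conjunct2[OF conjunct2[OF KR[OF r]]]], of t]
        Suc.IH Suc.prems unfolding d_def by simp
  qed
  have Ec: "E x \<in> carrier_mat d d" if "x < N" for x using P that unfolding povm_def psd_def d_def by auto
  have "(\<Sum>x<N. Re (mtrace (runm N M T T' x j m \<sigma> * E x))) =
      (\<Sum>x<N. Re (ffS (idx (d*d) m) d (\<lambda>a b. E x $$ (a, b)) (fam d M KK KK' (Some x) j F0 m) (fam d M KK KK' (Some x) j F0 m)))"
    using rep_trace[OF repm Ec] by simp
  also have "\<dots> \<le> (2 * real m + 1)\<^sup>2"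
  proof (rule core_bound[where N = N and M = M and d = d])
    show "d = N * M" by (simp add: d_def)
    fix t assume "t < m" thus "isoK d (KK (j + t)) \<and> isoK d (KK' (j + t))" using KR jm unfolding d_def by simp
  next
    show "(\<Sum>l<d*d. cn d (F0 l)) = 1" by (rule F0n)
  next
    fix y assume "y < N" thus "psdg {..<d} (\<lambda>a b. E y $$ (a, b))"
      using P unfolding povm_def d_def by (auto intro: psd_psdg)
  next
    fix i k assume "i < d" "k < d" thus "(\<Sum>y<N. E y $$ (i, k)) = Idm i k"
      using P unfolding povm_def d_def Idm_def by auto
  qed
  finally show ?thesis .
qed

definition linf :: "nat \<Rightarrow> (complex mat \<Rightarrow> complex) \<Rightarrow> bool" where
  "linf d \<phi> \<longleftrightarrow> (\<forall>A\<in>carrier_mat d d. \<forall>B\<in>carrier_mat d d. \<phi> (A + B) = \<phi> A + \<phi> B) \<and>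
     (\<forall>A\<in>carrier_mat d d. \<forall>c. \<phi> (c \<cdot>\<^sub>m A) = c * \<phi> A)"

lemma orcl_carrier: "orcl N M x A \<in> carrier_mat (N * M) (N * M)"
  unfolding orcl_def by simp

lemma orcl_add: "A \<in> carrier_mat (N*M) (N*M) \<Longrightarrow> B \<in> carrier_mat (N*M) (N*M) \<Longrightarrow>
   orcl N M x (A + B) = orcl N M x A + orcl N M x B"
  unfolding orcl_def by (intro eq_matI) (auto simp: algebra_simps)

lemma orcl_smult: "A \<in> carrier_mat (N*M) (N*M) \<Longrightarrow> orcl N M x (c \<cdot>\<^sub>m A) = c \<cdot>\<^sub>m orcl N M x A"
  unfolding orcl_def by (intro eq_matI) (auto simp: algebra_simps)

lemma orcl_trace: "A \<in> carrier_mat (N*M) (N*M) \<Longrightarrow> mtrace (orcl N M x A) = mtrace A"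
  unfolding orcl_def mtrace_def by (intro sum.cong) auto

context
  fixes N M k :: nat and T T' :: "nat \<Rightarrow> complex mat \<Rightarrow> complex mat"
  assumes ch: "\<forall>i<k. quantum_channel (N * M) (T i) \<and> quantum_channel (N * M) (T' i)"
begin

lemma rnd_carrier: "r < k \<Longrightarrow> A \<in> carrier_mat (N*M) (N*M) \<Longrightarrow> rnd N M T T' x r A \<in> carrier_mat (N*M) (N*M)"
  using ch orcl_carrier unfolding rnd_def quantum_channel_def lin_map_def by blast

lemma rnd_trace: "r < k \<Longrightarrow> A \<in> carrier_mat (N*M) (N*M) \<Longrightarrow> mtrace (rnd N M T T' x r A) = mtrace A"
proof -
  assume r: "r < k" and A: "A \<in> carrier_mat (N*M) (N*M)"
  have q: "quantum_channel (N * M) (T r)" "quantum_channel (N * M) (T' r)" using ch r by auto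
  have c: "T r A \<in> carrier_mat (N*M) (N*M)" using q A unfolding quantum_channel_def lin_map_def by blast
  show ?thesis unfolding rnd_def using q A c orcl_carrier orcl_trace
    unfolding quantum_channel_def by metis
qed

lemma rnd_linf: "r < k \<Longrightarrow> linf (N*M) \<phi> \<Longrightarrow> linf (N*M) (\<lambda>A. \<phi> (rnd N M T T' x r A))"
proof -
  assume r: "r < k" and L: "linf (N*M) \<phi>"
  have q: "lin_map (N * M) (T r)" "lin_map (N * M) (T' r)" using ch r unfolding quantum_channel_def by auto
  show ?thesis unfolding linf_def
  proof (intro conjI ballI allI)
    fix A B :: "complex mat" assume A: "A \<in> carrier_mat (N*M) (N*M)" and B: "B \<in> carrier_mat (N*M) (N*M)"
    have cA: "T r A \<in> carrier_mat (N*M) (N*M)" "T r B \<in> carrier_mat (N*M) (N*M)"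
      using q A B unfolding lin_map_def by auto
    have "rnd N M T T' x r (A + B) = rnd N M T T' x r A + rnd N M T T' x r B"
      unfolding rnd_def using q A B cA orcl_add orcl_carrier unfolding lin_map_def by metis
    moreover have "rnd N M T T' x r A \<in> carrier_mat (N*M) (N*M)" "rnd N M T T' x r B \<in> carrier_mat (N*M) (N*M)"
      using rnd_carrier[OF r] A B by auto
    ultimately show "\<phi> (rnd N M T T' x r (A + B)) = \<phi> (rnd N M T T' x r A) + \<phi> (rnd N M T T' x r B)"
      using L unfolding linf_def by simp
  next
    fix A :: "complex mat" and c assume A: "A \<in> carrier_mat (N*M) (N*M)"
    have cA: "T r A \<in> carrier_mat (N*M) (N*M)" using q A unfolding lin_map_def by auto
    have "rnd N M T T' x r (c \<cdot>\<^sub>m A) = c \<cdot>\<^sub>m rnd N M T T' x r A"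
      unfolding rnd_def using q A cA orcl_smult orcl_carrier unfolding lin_map_def by metis
    moreover have "rnd N M T T' x r A \<in> carrier_mat (N*M) (N*M)" using rnd_carrier[OF r] A by auto
    ultimately show "\<phi> (rnd N M T T' x r (c \<cdot>\<^sub>m A)) = c * \<phi> (rnd N M T T' x r A)"
      using L unfolding linf_def by simp
  qed
qed

lemma state_props:
  assumes "\<rho>0 \<in> carrier_mat (N*M) (N*M)" "mtrace \<rho>0 = 1" "\<tau> \<in> carrier_mat (N*M) (N*M)" "mtrace \<tau> = 1"
  shows "k' \<le> k \<Longrightarrow> state N M p \<tau> T T' \<rho>0 x k' \<in> carrier_mat (N*M) (N*M) \<and> mtrace (state N M p \<tau> T T' \<rho>0 x k') = 1"
proof (induction k')
  case 0 thus ?case using assms by simp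
next
  case (Suc k')
  let ?S = "state N M p \<tau> T T' \<rho>0 x k'"
  have IH: "?S \<in> carrier_mat (N*M) (N*M)" "mtrace ?S = 1" using Suc by auto
  have nc: "noise p \<tau> ?S \<in> carrier_mat (N*M) (N*M)" unfolding noise_def using IH assms by auto
  have nt: "mtrace (noise p \<tau> ?S) = 1"
  proof -
    have "mtrace (noise p \<tau> ?S) = (\<Sum>i<N*M. (complex_of_real p * mtrace ?S) * \<tau> $$ (i, i) + complex_of_real (1 - p) * ?S $$ (i, i))"
      unfolding mtrace_def noise_def using IH assms by (intro sum.cong) auto
    also have "\<dots> = complex_of_real p * mtrace ?S * mtrace \<tau> + complex_of_real (1 - p) * mtrace ?S"
      unfolding mtrace_def using IH assms by (simp add: sum.distrib sum_distrib_left)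
    also have "\<dots> = complex_of_real (p + (1 - p))" using IH assms by (simp only: of_real_add) simp
    finally show ?thesis by simp
  qed
  have r: "k' < k" using Suc.prems by simp
  have "state N M p \<tau> T T' \<rho>0 x (Suc k') = rnd N M T T' x k' (noise p \<tau> ?S)"
    by (simp add: rnd_def)
  thus ?case using rnd_carrier[OF r nc] rnd_trace[OF r nc] nt by simp
qed

lemma runm_carrier: "j + t \<le> k \<Longrightarrow> A \<in> carrier_mat (N*M) (N*M) \<Longrightarrow> runm N M T T' x j t A \<in> carrier_mat (N*M) (N*M)"
  by (induction t) (auto intro: rnd_carrier)


lemma decomp:
  assumes r0: "\<rho>0 \<in> carrier_mat (N*M) (N*M)" "mtrace \<rho>0 = 1"
    and ta: "\<tau> \<in> carrier_mat (N*M) (N*M)" "mtrace \<tau> = 1"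
  shows "k' \<le> k \<Longrightarrow> \<forall>\<phi>. linf (N*M) \<phi> \<longrightarrow> \<phi> (state N M p \<tau> T T' \<rho>0 x k') =
     of_real ((1 - p) ^ k') * \<phi> (runm N M T T' x 0 k' \<rho>0) +
     (\<Sum>t<k'. of_real (p * (1 - p) ^ t) * \<phi> (runm N M T T' x (k' - 1 - t) (t + 1) \<tau>))"
proof (induction k')
  case 0 thus ?case by simp
next
  case (Suc k')
  have r: "k' < k" using Suc.prems by simp
  show ?case
  proof (intro allI impI)
    fix \<phi> assume L: "linf (N*M) \<phi>"
    let ?S = "state N M p \<tau> T T' \<rho>0 x k'"
    let ?q = "1 - p"
    define \<psi> where "\<psi> A = \<phi> (rnd N M T T' x k' A)" for A
    have L': "linf (N*M) \<psi>" unfolding \<psi>_def by (rule rnd_linf[OF r L])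
    have SP: "?S \<in> carrier_mat (N*M) (N*M)" "mtrace ?S = 1"
      using state_props[OF r0 ta, of k' p x] r by auto
    have n: "noise p \<tau> ?S = complex_of_real p \<cdot>\<^sub>m \<tau> + complex_of_real ?q \<cdot>\<^sub>m ?S"
      unfolding noise_def SP(2) by simp
    have "\<phi> (state N M p \<tau> T T' \<rho>0 x (Suc k')) = \<psi> (noise p \<tau> ?S)"
      unfolding \<psi>_def by (simp add: rnd_def)
    also have "\<dots> = of_real p * \<psi> \<tau> + of_real ?q * \<psi> ?S"
      unfolding n using L' ta SP unfolding linf_def by simp
    also have "\<psi> ?S = of_real (?q ^ k') * \<psi> (runm N M T T' x 0 k' \<rho>0) +
       (\<Sum>t<k'. of_real (p * ?q ^ t) * \<psi> (runm N M T T' x (k' - 1 - t) (t + 1) \<tau>))"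
      using Suc.IH r L' by simp
    also have "\<psi> (runm N M T T' x 0 k' \<rho>0) = \<phi> (runm N M T T' x 0 (Suc k') \<rho>0)"
      unfolding \<psi>_def by simp
    also have "(\<Sum>t<k'. of_real (p * ?q ^ t) * \<psi> (runm N M T T' x (k' - 1 - t) (t + 1) \<tau>))
       = (\<Sum>t<k'. of_real (p * ?q ^ t) * \<phi> (runm N M T T' x (k' - 1 - t) (Suc t + 1) \<tau>))"
    proof (intro sum.cong refl)
      fix t assume "t \<in> {..<k'}"
      hence e: "k' - 1 - t + (t + 1) = k'" by auto
      show "of_real (p * ?q ^ t) * \<psi> (runm N M T T' x (k' - 1 - t) (t + 1) \<tau>) =
          of_real (p * ?q ^ t) * \<phi> (runm N M T T' x (k' - 1 - t) (Suc t + 1) \<tau>)"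
        unfolding \<psi>_def by (simp only: runm.simps e add_Suc)
    qed
    also have "\<psi> \<tau> = \<phi> (runm N M T T' x k' 1 \<tau>)" unfolding \<psi>_def by simp
    finally have "\<phi> (state N M p \<tau> T T' \<rho>0 x (Suc k')) =
        of_real p * \<phi> (runm N M T T' x k' 1 \<tau>) + of_real ?q * (of_real (?q ^ k') * \<phi> (runm N M T T' x 0 (Suc k') \<rho>0) +
        (\<Sum>t<k'. of_real (p * ?q ^ t) * \<phi> (runm N M T T' x (k' - 1 - t) (Suc t + 1) \<tau>)))" .
    also have "\<dots> = of_real (?q ^ Suc k') * \<phi> (runm N M T T' x 0 (Suc k') \<rho>0) +
       (of_real (p * ?q ^ 0) * \<phi> (runm N M T T' x (Suc k' - 1 - 0) (0 + 1) \<tau>) +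
        (\<Sum>t<k'. of_real (p * ?q ^ Suc t) * \<phi> (runm N M T T' x (Suc k' - 1 - Suc t) (Suc t + 1) \<tau>)))"
      by (simp add: sum_distrib_left algebra_simps)
    also have "\<dots> = of_real (?q ^ Suc k') * \<phi> (runm N M T T' x 0 (Suc k') \<rho>0) +
       (\<Sum>t<Suc k'. of_real (p * ?q ^ t) * \<phi> (runm N M T T' x (Suc k' - 1 - t) (t + 1) \<tau>))"
      by (simp only: sum.lessThan_Suc_shift)
    finally show "\<phi> (state N M p \<tau> T T' \<rho>0 x (Suc k')) = of_real (?q ^ Suc k') * \<phi> (runm N M T T' x 0 (Suc k') \<rho>0) +
       (\<Sum>t<Suc k'. of_real (p * ?q ^ t) * \<phi> (runm N M T T' x (Suc k' - 1 - t) (t + 1) \<tau>))" .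
  qed
qed

end

lemma S_closed:
  fixes p :: real
  shows "(1 - p) ^ k * (2 * real k + 1)\<^sup>2 + (\<Sum>t<k. p * (1 - p) ^ t * (2 * real (t + 1) + 1)\<^sup>2)
     = 1 + 8 * (\<Sum>t<k. real (t + 1) * (1 - p) ^ t)"
proof (induction k)
  case 0 thus ?case by simp
next
  case (Suc k)
  have "(1 - p) ^ Suc k * (2 * real (Suc k) + 1)\<^sup>2 + (\<Sum>t<Suc k. p * (1 - p) ^ t * (2 * real (t + 1) + 1)\<^sup>2)
     = ((1 - p) ^ k * (2 * real k + 1)\<^sup>2 + (\<Sum>t<k. p * (1 - p) ^ t * (2 * real (t + 1) + 1)\<^sup>2))
       + (1 - p) ^ k * (8 * real k + 8)"
    by (simp add: power2_eq_square algebra_simps)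
  also have "\<dots> = 1 + 8 * (\<Sum>t<Suc k. real (t + 1) * (1 - p) ^ t)"
    unfolding Suc.IH by (simp add: algebra_simps)
  finally show ?case .
qed

lemma geo1:
  fixes p :: real
  shows "p * (\<Sum>t<k. (1 - p) ^ t) = 1 - (1 - p) ^ k"
  by (induction k) (auto simp: algebra_simps)

lemma geo2:
  fixes p :: real
  shows "p\<^sup>2 * (\<Sum>t<k. real (t + 1) * (1 - p) ^ t) = 1 - real (k + 1) * (1 - p) ^ k + real k * (1 - p) ^ (k + 1)"
  by (induction k) (auto simp: algebra_simps power2_eq_square)

lemma bound1:
  fixes p :: real assumes "0 < p" "p \<le> 1"
  shows "(\<Sum>t<k. real (t + 1) * (1 - p) ^ t) \<le> 1 / p\<^sup>2"
proof -
  have q: "0 \<le> 1 - p" "1 - p \<le> 1" using assms by auto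
  have "real (k + 1) * (1 - p) ^ k - real k * (1 - p) ^ (k + 1) = (1 - p) ^ k * (real k * p + 1)"
    by (simp add: algebra_simps)
  also have "\<dots> \<ge> 0" using q assms by simp
  finally have "p\<^sup>2 * (\<Sum>t<k. real (t + 1) * (1 - p) ^ t) \<le> 1" unfolding geo2 by linarith
  thus ?thesis using assms by (simp add: field_simps)
qed

lemma bound2:
  fixes p :: real assumes "0 < p" "p \<le> 1"
  shows "(\<Sum>t<k. real (t + 1) * (1 - p) ^ t) \<le> real k / p"
proof -
  have q: "0 \<le> 1 - p" using assms by auto
  have "(\<Sum>t<k. real (t + 1) * (1 - p) ^ t) \<le> (\<Sum>t<k. real k * (1 - p) ^ t)"
    using q by (intro sum_mono mult_right_mono) auto
  also have "\<dots> = real k * (\<Sum>t<k. (1 - p) ^ t)" by (simp add: sum_distrib_left)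
  also have "(\<Sum>t<k. (1 - p) ^ t) \<le> 1 / p"
  proof -
    have "p * (\<Sum>t<k. (1 - p) ^ t) \<le> 1" unfolding geo1 using q by simp
    thus ?thesis using assms by (simp add: field_simps)
  qed
  hence "real k * (\<Sum>t<k. (1 - p) ^ t) \<le> real k * (1 / p)" by (intro mult_left_mono) auto
  finally show ?thesis by simp
qed

theorem theorem1:
  fixes N M k :: nat and p :: real and \<rho>0 \<tau> :: "complex mat"
    and T T' :: "nat \<Rightarrow> complex mat \<Rightarrow> complex mat" and E :: "nat \<Rightarrow> complex mat"
  assumes "N \<ge> 1" and "M \<ge> 1" and "k \<ge> 1"
    and "density_op (N * M) \<rho>0" and "density_op (N * M) \<tau>"
    and "0 \<le> p" and "p \<le> 1"
    and "\<forall>i<k. quantum_channel (N * M) (T i) \<and> quantum_channel (N * M) (T' i)"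
    and "povm (N * M) N E"
  defines "ps \<equiv> (\<Sum>x<N. (1 / of_nat N) * mtrace (state N M p \<tau> T T' \<rho>0 x k * E x))"
  shows "0 < p \<longrightarrow>
           Re ps \<le> 1 / real N + 8 / (real N * p\<^sup>2) \<and>
           Re ps \<le> 8 * (real k + 1) / (real N * p)"
proof (intro impI)
  assume p0: "0 < p"
  have p1: "p \<le> 1" using assms(7) .
  have chK: "\<forall>i<k. quantum_channel (N * M) (T i) \<and> quantum_channel (N * M) (T' i)" using assms(8) .
  have ro: "\<rho>0 \<in> carrier_mat (N*M) (N*M)" "mtrace \<rho>0 = 1"
    using assms(4) unfolding density_op_def psd_def by auto
  have ta: "\<tau> \<in> carrier_mat (N*M) (N*M)" "mtrace \<tau> = 1"
    using assms(5) unfolding density_op_def psd_def by auto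
  have "\<forall>r. \<exists>K. r < k \<longrightarrow> krausrep (N*M) (T r) K \<and> isoK (N*M) K" using kraus_full chK by blast
  then obtain KK where KK: "\<forall>r. r < k \<longrightarrow> krausrep (N*M) (T r) (KK r) \<and> isoK (N*M) (KK r)" by metis
  have "\<forall>r. \<exists>K. r < k \<longrightarrow> krausrep (N*M) (T' r) K \<and> isoK (N*M) K" using kraus_full chK by blast
  then obtain KK' where KK': "\<forall>r. r < k \<longrightarrow> krausrep (N*M) (T' r) (KK' r) \<and> isoK (N*M) (KK' r)" by metis
  have KR: "\<And>r. r < k \<Longrightarrow> krausrep (N * M) (T r) (KK r) \<and> isoK (N * M) (KK r) \<and>
                             krausrep (N * M) (T' r) (KK' r) \<and> isoK (N * M) (KK' r)"
    using KK KK' by blast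
  define \<phi> where "\<phi> x A = mtrace (A * E x)" for x A
  have Ec: "E x \<in> carrier_mat (N*M) (N*M)" if "x < N" for x
    using assms(9) that unfolding povm_def psd_def by auto
  have lin: "linf (N*M) (\<phi> x)" if x: "x < N" for x
    unfolding linf_def
  proof (intro conjI ballI allI)
    fix A B :: "complex mat" assume A: "A \<in> carrier_mat (N*M) (N*M)" and B: "B \<in> carrier_mat (N*M) (N*M)"
    have d1: "(A + B) * E x = A * E x + B * E x" using A B Ec[OF x] by (rule add_mult_distrib_mat)
    have d2: "dim_row (B * E x) = N*M" "dim_col (B * E x) = N*M" using B Ec[OF x] by auto
    have e: "\<And>i. i \<in> {..<N*M} \<Longrightarrow> ((A + B) * E x) $$ (i, i) = (A * E x) $$ (i, i) + (B * E x) $$ (i, i)"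
      unfolding d1 using d2 by simp
    have "(\<Sum>i<N*M. ((A + B) * E x) $$ (i, i)) = (\<Sum>i<N*M. (A * E x) $$ (i, i)) + (\<Sum>i<N*M. (B * E x) $$ (i, i))"
      unfolding sum.distrib[symmetric] using e by (rule sum.cong[OF refl])
    thus "\<phi> x (A + B) = \<phi> x A + \<phi> x B"
      unfolding \<phi>_def mtrace_def using A B by simp
  next
    fix A :: "complex mat" and c assume A: "A \<in> carrier_mat (N*M) (N*M)"
    have d1: "(c \<cdot>\<^sub>m A) * E x = c \<cdot>\<^sub>m (A * E x)" using A Ec[OF x] by (rule mult_smult_assoc_mat)
    have d2: "dim_row (A * E x) = N*M" "dim_col (A * E x) = N*M" using A Ec[OF x] by auto
    have e: "\<And>i. i \<in> {..<N*M} \<Longrightarrow> ((c \<cdot>\<^sub>m A) * E x) $$ (i, i) = c * (A * E x) $$ (i, i)"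
      unfolding d1 using d2 by simp
    have "(\<Sum>i<N*M. ((c \<cdot>\<^sub>m A) * E x) $$ (i, i)) = c * (\<Sum>i<N*M. (A * E x) $$ (i, i))"
      unfolding sum_distrib_left using e by (rule sum.cong[OF refl])
    thus "\<phi> x (c \<cdot>\<^sub>m A) = c * \<phi> x A"
      unfolding \<phi>_def mtrace_def using A by simp
  qed
  let ?q = "1 - p"
  have dec: "Re (\<phi> x (state N M p \<tau> T T' \<rho>0 x k)) =
     ?q ^ k * Re (\<phi> x (runm N M T T' x 0 k \<rho>0)) +
     (\<Sum>t<k. p * ?q ^ t * Re (\<phi> x (runm N M T T' x (k - 1 - t) (t + 1) \<tau>)))" if x: "x < N" for x
  proof -
    have "\<phi> x (state N M p \<tau> T T' \<rho>0 x k) =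
     of_real (?q ^ k) * \<phi> x (runm N M T T' x 0 k \<rho>0) +
     (\<Sum>t<k. of_real (p * ?q ^ t) * \<phi> x (runm N M T T' x (k - 1 - t) (t + 1) \<tau>))"
      using decomp[OF chK ro ta, of k p x] lin[OF x] by blast
    thus ?thesis by (simp add: Re_sum)
  qed
  have b0: "(\<Sum>x<N. Re (\<phi> x (runm N M T T' x 0 k \<rho>0))) \<le> (2 * real k + 1)\<^sup>2"
    unfolding \<phi>_def by (rule branch_bound[OF _ KR assms(4) assms(9)]) auto
  have bt: "(\<Sum>x<N. Re (\<phi> x (runm N M T T' x (k - 1 - t) (t + 1) \<tau>))) \<le> (2 * real (t + 1) + 1)\<^sup>2"
    if "t < k" for t
    unfolding \<phi>_def by (rule branch_bound[OF _ KR assms(5) assms(9)]) (use that in auto)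
  have q0: "0 \<le> ?q" using p1 by simp
  have "(\<Sum>x<N. Re (\<phi> x (state N M p \<tau> T T' \<rho>0 x k))) =
     ?q ^ k * (\<Sum>x<N. Re (\<phi> x (runm N M T T' x 0 k \<rho>0))) +
     (\<Sum>t<k. p * ?q ^ t * (\<Sum>x<N. Re (\<phi> x (runm N M T T' x (k - 1 - t) (t + 1) \<tau>))))"
    using dec by (simp add: sum.distrib sum_distrib_left sum.swap[of _ "{..<N}"])
  also have "\<dots> \<le> ?q ^ k * (2 * real k + 1)\<^sup>2 + (\<Sum>t<k. p * ?q ^ t * (2 * real (t + 1) + 1)\<^sup>2)"
  proof (intro add_mono mult_left_mono sum_mono)
    show "(\<Sum>x<N. Re (\<phi> x (runm N M T T' x 0 k \<rho>0))) \<le> (2 * real k + 1)\<^sup>2" by (rule b0)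
    show "0 \<le> ?q ^ k" using q0 by simp
  next
    fix t assume "t \<in> {..<k}"
    thus "(\<Sum>x<N. Re (\<phi> x (runm N M T T' x (k - 1 - t) (t + 1) \<tau>))) \<le> (2 * real (t + 1) + 1)\<^sup>2"
      using bt by simp
    show "0 \<le> p * ?q ^ t" using q0 p0 by simp
  qed
  also have "\<dots> = 1 + 8 * (\<Sum>t<k. real (t + 1) * ?q ^ t)" by (rule S_closed)
  finally have main: "(\<Sum>x<N. Re (\<phi> x (state N M p \<tau> T T' \<rho>0 x k))) \<le> 1 + 8 * (\<Sum>t<k. real (t + 1) * ?q ^ t)" .
  have Nps: "Re ps = (\<Sum>x<N. Re (\<phi> x (state N M p \<tau> T T' \<rho>0 x k))) / real N"
    unfolding ps_def \<phi>_def by (simp add: Re_sum sum_divide_distrib)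
  have Npos: "real N > 0" using assms(1) by simp
  have G1: "(\<Sum>t<k. real (t + 1) * ?q ^ t) \<le> 1 / p\<^sup>2" by (rule bound1[OF p0 p1])
  have G2: "(\<Sum>t<k. real (t + 1) * ?q ^ t) \<le> real k / p" by (rule bound2[OF p0 p1])
  have m1: "(\<Sum>x<N. Re (\<phi> x (state N M p \<tau> T T' \<rho>0 x k))) \<le> 1 + 8 * (1 / p\<^sup>2)"
    using main G1 by linarith
  have "Re ps \<le> (1 + 8 * (1 / p\<^sup>2)) / real N"
    unfolding Nps using divide_right_mono[OF m1, of "real N"] Npos by simp
  also have "\<dots> = 1 / real N + 8 / (real N * p\<^sup>2)" by (simp add: add_divide_distrib)
  finally have A1: "Re ps \<le> 1 / real N + 8 / (real N * p\<^sup>2)" .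
  have "1 \<le> 8 / p" using p0 p1 by (simp add: le_divide_eq)
  moreover have "8 * (real k + 1) / p = 8 / p + 8 * (real k / p)" by (simp add: distrib_left add_divide_distrib)
  ultimately have m2: "(\<Sum>x<N. Re (\<phi> x (state N M p \<tau> T T' \<rho>0 x k))) \<le> 8 * (real k + 1) / p"
    using main G2 by linarith
  have "Re ps \<le> (8 * (real k + 1) / p) / real N"
    unfolding Nps using divide_right_mono[OF m2, of "real N"] Npos by simp
  also have "\<dots> = 8 * (real k + 1) / (real N * p)" by (metis divide_divide_eq_left mult.commute)
  finally show "Re ps \<le> 1 / real N + 8 / (real N * p\<^sup>2) \<and> Re ps \<le> 8 * (real k + 1) / (real N * p)"
    using A1 by simp
qed

end
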